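(* Let $n\ge2$, $\alpha>0$, and let $\Omega\in L^1(\mathbf S^{n-1})$ have mean value zero and satisfy $\sup_{\xi\in \mathbf S^{n-1}}\int_{\mathbf S^{n-1}} |\Omega(\theta)|(\ln\frac{1}{|\theta\cdot\xi|})^{1+\alpha}d\theta<\infty$. Let $\sigma_k(x)=\frac{\Omega(x/|x|)}{|x|^n}\chi_{\{2^k\le|x|\le 2^{k+1}\}}(x)$ for $k\in\mathbb Z$, and define the maximal operator $\sigma^*(f)=\sup_{k\in\mathbb Z}(|\sigma_k|*|f|)$. Then for every $p$ with $\frac{2+\alpha}{1+\alpha}<p<2+\alpha$ there is $C$ with $\|\sigma^*(f)\|_{L^p(\mathbb R^n)}\le C\|f\|_{L^p(\mathbb R^n)}$ for all $f\in L^p(\mathbb R^n)$. *)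

theory Defs
  imports "HOL-Analysis.Analysis"
begin

text \<open>Surface measure on the unit sphere S^{n-1} of a Euclidean space, defined by the
  polar-coordinate identity: sigma(A) = n * |{x : 0 < |x| < 1, x/|x| \<in> A}|.\<close>
definition sphere_measure :: "'a::euclidean_space measure" where
  "sphere_measure =
     density
       (distr (restrict_space lborel (ball 0 1 - {0})) (restrict_space borel (sphere 0 1))
              (\<lambda>x. x /\<^sub>R norm x))
       (\<lambda>_. ennreal (real DIM('a)))"

definition enn_powr :: "ennreal \<Rightarrow> real \<Rightarrow> ennreal" where
  "enn_powr x p = (if x = \<infinity> then \<infinity> else ennreal (enn2real x powr p))"

definition sigma_k :: "('a::euclidean_space \<Rightarrow> real) \<Rightarrow> int \<Rightarrow> 'a \<Rightarrow> real" where
  "sigma_k \<Omega> k x =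
     (if 2 powr real_of_int k \<le> norm x \<and> norm x \<le> 2 powr real_of_int (k + 1)
      then \<Omega> (x /\<^sub>R norm x) / norm x ^ DIM('a) else 0)"

definition sigma_star :: "('a::euclidean_space \<Rightarrow> real) \<Rightarrow> ('a \<Rightarrow> real) \<Rightarrow> 'a \<Rightarrow> ennreal" where
  "sigma_star \<Omega> f x =
     (SUP k\<in>(UNIV::int set). \<integral>\<^sup>+ y. ennreal (\<bar>sigma_k \<Omega> k (x - y)\<bar> * \<bar>f y\<bar>) \<partial>lebesgue)"

definition Lp_norm :: "real \<Rightarrow> ('a::euclidean_space \<Rightarrow> real) \<Rightarrow> ennreal" where
  "Lp_norm p f = enn_powr (\<integral>\<^sup>+ x. ennreal (\<bar>f x\<bar> powr p) \<partial>lebesgue) (1 / p)"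

definition Lp_norm_enn :: "real \<Rightarrow> ('a::euclidean_space \<Rightarrow> ennreal) \<Rightarrow> ennreal" where
  "Lp_norm_enn p g = enn_powr (\<integral>\<^sup>+ x. enn_powr (g x) p \<partial>lebesgue) (1 / p)"

end

theory Submission
  imports Defs
begin


lemma enn_powr_ennreal: "t \<ge> 0 \<Longrightarrow> enn_powr (ennreal t) p = ennreal (t powr p)"
  by (simp add: enn_powr_def)

lemma enn_powr_0[simp]: "enn_powr 0 p = 0"
  by (simp add: enn_powr_def)

lemma enn_powr_top[simp]: "enn_powr top p = top"
  by (simp add: enn_powr_def)

lemma enn_powr_mono:
  assumes "p > 0" "x \<le> y" shows "enn_powr x p \<le> enn_powr y p"
proof (cases "y = top")
  case True then show ?thesis by simp
next
  case False
  then obtain b where b: "y = ennreal b" "b \<ge> 0" by (cases y) auto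
  have "x \<noteq> top" using False assms(2) by (metis top_unique)
  then obtain a where a: "x = ennreal a" "a \<ge> 0" by (cases x) auto
  with b assms have "a \<le> b" by simp
  then show ?thesis using a b assms by (simp add: enn_powr_ennreal powr_mono2)
qed

lemma enn_powr_strict_mono:
  assumes "p > 0" "x < y" shows "enn_powr x p < enn_powr y p"
proof (cases "y = top")
  case True
  have "x \<noteq> top" using assms(2) True by simp
  then obtain a where a: "x = ennreal a" "a \<ge> 0" by (cases x) auto
  then show ?thesis using True by (simp add: enn_powr_ennreal)
next
  case False
  then obtain b where b: "y = ennreal b" "b \<ge> 0" by (cases y) auto
  have "x \<noteq> top" using assms(2) by (metis top_greatest not_le)
  then obtain a where a: "x = ennreal a" "a \<ge> 0" by (cases x) auto
  with b assms have "a < b" by (simp add: ennreal_less_iff)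
  then have "a powr p < b powr p" using a assms by (simp add: powr_less_mono2)
  then have "ennreal (a powr p) < ennreal (b powr p)"
    by (meson ennreal_lessI powr_ge_zero le_less_trans)
  then show ?thesis using a b by (simp add: enn_powr_ennreal)
qed

lemma enn_powr_le_iff: "p > 0 \<Longrightarrow> enn_powr x p \<le> enn_powr y p \<longleftrightarrow> x \<le> y"
  by (meson enn_powr_mono enn_powr_strict_mono not_le)

lemma enn_powr_inv: assumes "p > 0" shows "enn_powr (enn_powr x p) (1/p) = x"
proof (cases "x = top")
  case False
  then obtain a where a: "x = ennreal a" "a \<ge> 0" by (cases x) auto
  then show ?thesis using assms by (simp add: enn_powr_ennreal powr_powr)
qed simp

lemma enn_powr_inv': assumes "p > 0" shows "enn_powr (enn_powr x (1/p)) p = x"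
  using enn_powr_inv[of "1/p" x] assms by simp

lemma enn_powr_mult: assumes "p > 0" shows "enn_powr (x * y) p = enn_powr x p * enn_powr y p"
proof (cases "x = 0 \<or> y = 0")
  case True then show ?thesis by auto
next
  case False
  show ?thesis
  proof (cases "x = top \<or> y = top")
    case True
    have nz: "enn_powr u p \<noteq> 0" if "u \<noteq> 0" for u
    proof (cases "u = top")
      case False
      then have "enn2real u > 0" using that by (simp add: enn2real_positive_iff less_top order.not_eq_order_implies_strict)
      then show ?thesis unfolding enn_powr_def using False by simp
    qed simp
    have "x * y = top" using False True by (simp add: ennreal_mult_eq_top_iff)
    moreover have "enn_powr x p * enn_powr y p = top"
    proof (cases "x = top")
      case True
      then show ?thesis using nz[of y] False by (simp add: ennreal_top_mult)
    next
      case F3: False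
      then have "y = top" using True by simp
      then show ?thesis using nz[of x] False by (simp add: ennreal_mult_top)
    qed
    ultimately show ?thesis by simp
  next
    case F2: False
    then obtain a b where ab: "x = ennreal a" "a \<ge> 0" "y = ennreal b" "b \<ge> 0"
      by (cases x; cases y) auto
    then show ?thesis using assms
      by (simp add: enn_powr_ennreal ennreal_mult[symmetric] powr_mult)
  qed
qed

lemma enn_powr_Sup:
  assumes "p > 0" shows "enn_powr (Sup S) p = (SUP x\<in>S. enn_powr x p)"
proof (rule antisym)
  show "(SUP x\<in>S. enn_powr x p) \<le> enn_powr (Sup S) p"
    by (rule SUP_least) (intro enn_powr_mono assms Sup_upper)
next
  define y where "y = (SUP x\<in>S. enn_powr x p)"
  define z where "z = enn_powr y (1/p)"
  have yz: "enn_powr z p = y" unfolding z_def using enn_powr_inv'[OF assms] .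
  have "s \<le> z" if "s \<in> S" for s
  proof -
    have "enn_powr s p \<le> enn_powr z p" unfolding yz y_def using that by (rule SUP_upper)
    then show ?thesis using enn_powr_le_iff[OF assms] by blast
  qed
  then have "Sup S \<le> z" by (rule Sup_least)
  then have "enn_powr (Sup S) p \<le> enn_powr z p" by (rule enn_powr_mono[OF assms])
  then show "enn_powr (Sup S) p \<le> (SUP x\<in>S. enn_powr x p)" using yz y_def by simp
qed

lemma enn_powr_measurable[measurable]:
  assumes [measurable]: "f \<in> borel_measurable M"
  shows "(\<lambda>x. enn_powr (f x) p) \<in> borel_measurable M"
  unfolding enn_powr_def by measurable

lemma enn_powr_one[simp]: "enn_powr 1 p = 1"
  by (simp add: enn_powr_def)



lemma young_tangent:
  fixes t c p :: real
  assumes "t \<ge> 0" "c > 0" "p > 1"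
  shows "t \<le> c powr (1 - p) * t powr p / p + (1 - 1/p) * c"
proof -
  define q where "q = p / (p - 1)"
  have q1: "q > 1" using assms unfolding q_def by (simp add: field_simps)
  have pq: "1/p + 1/q = 1" using assms unfolding q_def by (simp add: field_simps)
  define a where "a = t * c powr ((1 - p) / p)"
  define b where "b = c powr ((p - 1) / p)"
  have a0: "a \<ge> 0" using assms unfolding a_def by simp
  have b0: "b \<ge> 0" unfolding b_def by simp
  have "a * b = t * (c powr ((1 - p) / p) * c powr ((p - 1) / p))" unfolding a_def b_def by simp
  also have "c powr ((1 - p) / p) * c powr ((p - 1) / p) = c powr ((1 - p) / p + (p - 1) / p)"
    by (simp add: powr_add)
  also have "(1 - p) / p + (p - 1) / p = 0" by (simp add: add_divide_distrib[symmetric])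
  finally have ab: "a * b = t" using assms by simp
  have "a powr p = t powr p * (c powr ((1 - p) / p)) powr p"
    unfolding a_def using assms by (simp add: powr_mult)
  also have "(c powr ((1 - p) / p)) powr p = c powr (1 - p)"
    using assms by (simp add: powr_powr)
  finally have ap: "a powr p = t powr p * c powr (1 - p)" .
  have "b powr q = c powr ((p - 1) / p * q)" unfolding b_def by (simp add: powr_powr)
  also have "(p - 1) / p * q = 1" using assms unfolding q_def by (simp add: field_simps)
  finally have bq: "b powr q = c" using assms by simp
  have "t = a * b" using ab by simp
  also have "\<dots> \<le> a powr p / p + b powr q / q"
    by (rule Youngs_inequality[OF assms(3) q1 pq a0 b0])
  also have "\<dots> = c powr (1 - p) * t powr p / p + (1 - 1/p) * c"
    unfolding ap bq unfolding q_def using assms by (simp add: field_simps)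
  finally show ?thesis .
qed

lemma enn_powr_eq_0_iff: "p > 0 \<Longrightarrow> enn_powr x p = 0 \<longleftrightarrow> x = 0"
  using enn_powr_le_iff[of p x 0] by simp

lemma enn_jensen:
  fixes M :: "'b measure" and h :: "'b \<Rightarrow> ennreal"
  assumes p: "p > 1" and hm[measurable]: "h \<in> borel_measurable M"
  shows "enn_powr (\<integral>\<^sup>+x. h x \<partial>M) p
     \<le> enn_powr (emeasure M (space M)) (p - 1) * (\<integral>\<^sup>+x. enn_powr (h x) p \<partial>M)"
proof -
  define W where "W = emeasure M (space M)"
  define Q where "Q = (\<integral>\<^sup>+x. enn_powr (h x) p \<partial>M)"
  have p0: "p > 0" using p by simp
  show ?thesis
  proof (cases "Q = 0")
    case True
    then have "AE x in M. enn_powr (h x) p = 0"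
      unfolding Q_def by (subst nn_integral_0_iff_AE[symmetric]) auto
    then have "AE x in M. h x = 0" using enn_powr_eq_0_iff[OF p0] by simp
    then have "(\<integral>\<^sup>+x. h x \<partial>M) = 0" by (simp add: nn_integral_0_iff_AE)
    then show ?thesis by simp
  next
    case Qn0: False
    show ?thesis
    proof (cases "W = 0")
      case True
      then have "AE x in M. h x = 0"
        unfolding W_def by (intro AE_I'[of "space M"]) (auto simp: null_sets_def)
      then have "(\<integral>\<^sup>+x. h x \<partial>M) = 0" by (simp add: nn_integral_0_iff_AE)
      then show ?thesis by simp
    next
      case Wn0: False
      show ?thesis
      proof (cases "W = top \<or> Q = top")
        case True
        have "enn_powr W (p - 1) \<noteq> 0" using Wn0 p by (simp add: enn_powr_eq_0_iff)
        then have "enn_powr W (p - 1) * Q = top"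
          using True Qn0 Wn0 p
          by (auto simp: ennreal_mult_eq_top_iff)
        then show ?thesis unfolding W_def Q_def by simp
      next
        case False
        then obtain w q where wq: "W = ennreal w" "Q = ennreal q" "w \<ge> 0" "q \<ge> 0"
          by (cases W; cases Q) auto
        have w0: "w > 0" using wq Wn0 by (simp add: le_less)
        have q0: "q > 0" using wq Qn0 by (simp add: le_less)
        define c where "c = (q / w) powr (1 / p)"
        have c0: "c > 0" unfolding c_def using w0 q0 by simp
        have cp: "c powr p = q / w" unfolding c_def using w0 q0 p by (simp add: powr_powr)
        have pt: "h x \<le> ennreal (c powr (1 - p) / p) * enn_powr (h x) p + ennreal ((1 - 1/p) * c)" for x
        proof (cases "h x = top")
          case True
          have "c powr (1 - p) / p > 0" using c0 p by simp
          then show ?thesis using True c0 p by (simp add: ennreal_mult_top)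
        next
          case False
          then obtain t where t: "h x = ennreal t" "t \<ge> 0" by (cases "h x") auto
          have "t \<le> c powr (1 - p) / p * t powr p + (1 - 1/p) * c"
            using young_tangent[OF t(2) c0 p] by simp
          then have "ennreal t \<le> ennreal (c powr (1 - p) / p * t powr p + (1 - 1/p) * c)"
            by (rule ennreal_leI)
          also have "\<dots> = ennreal (c powr (1 - p) / p) * ennreal (t powr p) + ennreal ((1 - 1/p) * c)"
            using c0 p by (simp add: ennreal_plus[symmetric] ennreal_mult[symmetric] del: ennreal_plus)
          finally show ?thesis using t by (simp add: enn_powr_ennreal)
        qed
        have "(\<integral>\<^sup>+x. h x \<partial>M) \<le> (\<integral>\<^sup>+x. ennreal (c powr (1 - p) / p) * enn_powr (h x) p + ennreal ((1 - 1/p) * c) \<partial>M)"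
          by (rule nn_integral_mono) (rule pt)
        also have "\<dots> = ennreal (c powr (1 - p) / p) * Q + ennreal ((1 - 1/p) * c) * W"
          unfolding Q_def W_def
          by (simp add: nn_integral_add nn_integral_cmult)
        also have "\<dots> = ennreal (c powr (1 - p) / p * q + (1 - 1/p) * c * w)"
          using wq c0 p by (simp add: ennreal_plus[symmetric] ennreal_mult[symmetric] del: ennreal_plus)
        also have "c powr (1 - p) / p * q + (1 - 1/p) * c * w = c * w"
        proof -
          have "c powr (1 - p) * q = c powr (1 - p) * c powr p * w" using cp w0 by simp
          also have "c powr (1 - p) * c powr p = c" using c0 by (simp add: powr_add[symmetric])
          finally have "c powr (1 - p) * q = c * w" .
          then show ?thesis using p by (simp add: field_simps)
        qed
        finally have le: "(\<integral>\<^sup>+x. h x \<partial>M) \<le> ennreal (c * w)" .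
        have "enn_powr (\<integral>\<^sup>+x. h x \<partial>M) p \<le> enn_powr (ennreal (c * w)) p"
          by (rule enn_powr_mono[OF p0 le])
        also have "\<dots> = ennreal ((c * w) powr p)" using c0 w0 by (simp add: enn_powr_ennreal)
        also have "(c * w) powr p = w powr (p - 1) * q"
        proof -
          have "(c * w) powr p = c powr p * w powr p" using c0 w0 by (simp add: powr_mult)
          also have "\<dots> = q / w * w powr p" using cp by simp
          also have "w powr p = w powr (p - 1) * w" using w0 by (simp add: powr_diff)
          finally show ?thesis using w0 by simp
        qed
        also have "ennreal (w powr (p - 1) * q) = enn_powr W (p - 1) * Q"
          using wq w0 by (simp add: enn_powr_ennreal ennreal_mult)
        finally show ?thesis unfolding W_def Q_def .
      qed
    qed
  qed
qed



lemma powr_nn_integral: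
  fixes x q :: real
  assumes "x \<ge> 0" "q > 0"
  shows "(\<integral>\<^sup>+ l. ennreal (indicator {0..<x} l * l powr (q - 1)) \<partial>lborel) = ennreal (x powr q / q)"
proof -
  have hi: "((\<lambda>l. l powr (q - 1)) has_integral (x powr (q - 1 + 1) / (q - 1 + 1))) {0..x}"
    by (rule has_integral_powr_from_0) (use assms in auto)
  have "(\<integral>\<^sup>+ l. ennreal (indicator {0..x} l * l powr (q - 1)) \<partial>lborel) = ennreal (x powr q / q)"
    using nn_integral_has_integral_lebesgue[OF _ hi] by simp
  moreover have "(\<integral>\<^sup>+ l. ennreal (indicator {0..<x} l * l powr (q - 1)) \<partial>lborel)
      = (\<integral>\<^sup>+ l. ennreal (indicator {0..x} l * l powr (q - 1)) \<partial>lborel)"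
    by (rule nn_integral_cong_AE) (use AE_lborel_singleton[of x] in \<open>auto simp: indicator_def\<close>)
  ultimately show ?thesis by simp
qed

definition avg :: "(nat \<Rightarrow> real) \<Rightarrow> nat \<Rightarrow> nat \<Rightarrow> real" where
  "avg a N i = (\<Sum>m<N. a (i + m)) / real N"

lemma weak11_gen:
  fixes a :: "nat \<Rightarrow> real"
  assumes l: "l > 0" and a: "\<And>m. a m \<ge> 0"
  shows "l * card {i. s \<le> i \<and> i < T \<and> (\<exists>N\<in>{1..L}. avg a N i > l)} \<le> (\<Sum>m\<in>{s..<T+L}. a m)"
proof (induction "T - s" arbitrary: s rule: less_induct)
  case less
  let ?P = "\<lambda>i. \<exists>N\<in>{1..L}. avg a N i > l"
  show ?case
  proof (cases "s < T")
    case False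
    then have e: "{i. s \<le> i \<and> i < T \<and> ?P i} = {}" by auto
    show ?thesis unfolding e by (simp add: sum_nonneg a)
  next
    case sT: True
    show ?thesis
    proof (cases "?P s")
      case False
      then have eq: "{i. s \<le> i \<and> i < T \<and> ?P i} = {i. Suc s \<le> i \<and> i < T \<and> ?P i}"
        using le_eq_less_or_eq by auto
      have "l * card {i. Suc s \<le> i \<and> i < T \<and> ?P i} \<le> (\<Sum>m\<in>{Suc s..<T+L}. a m)"
        using less sT by simp
      also have "\<dots> \<le> (\<Sum>m\<in>{s..<T+L}. a m)"
        by (rule sum_mono2) (auto simp: a)
      finally show ?thesis using eq by simp
    next
      case True
      then obtain N where N: "N \<in> {1..L}" "avg a N s > l" by blast
      have sumN: "l * N < (\<Sum>m\<in>{s..<s+N}. a m)"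
      proof -
        have "(\<Sum>m\<in>{s..<s+N}. a m) = (\<Sum>m<N. a (s + m))"
          by (rule sum.reindex_bij_witness[of _ "\<lambda>m. s + m" "\<lambda>m. m - s"]) auto
        moreover have "N > 0" using N by simp
        ultimately show ?thesis using N(2) unfolding avg_def by (simp add: field_simps)
      qed
      have sub: "{i. s \<le> i \<and> i < T \<and> ?P i} \<subseteq> {s..<s+N} \<union> {i. s + N \<le> i \<and> i < T \<and> ?P i}"
        by auto
      have "card {i. s \<le> i \<and> i < T \<and> ?P i} \<le> card ({s..<s+N} \<union> {i. s + N \<le> i \<and> i < T \<and> ?P i})"
        by (rule card_mono[OF _ sub]) auto
      also have "\<dots> \<le> N + card {i. s + N \<le> i \<and> i < T \<and> ?P i}"
        using card_Un_le[of "{s..<s+N}"] by simp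
      finally have c: "real (card {i. s \<le> i \<and> i < T \<and> ?P i}) \<le> N + card {i. s + N \<le> i \<and> i < T \<and> ?P i}"
        by linarith
      have IH: "l * card {i. s + N \<le> i \<and> i < T \<and> ?P i} \<le> (\<Sum>m\<in>{s+N..<T+L}. a m)"
      proof (rule less(1)[of "s + N"])
        show "T - (s + N) < T - s" using N sT by arith
      qed
      have split: "(\<Sum>m\<in>{s..<T+L}. a m) = (\<Sum>m\<in>{s..<s+N}. a m) + (\<Sum>m\<in>{s+N..<T+L}. a m)"
        using N sT by (simp add: sum.atLeastLessThan_concat)
      have "l * card {i. s \<le> i \<and> i < T \<and> ?P i} \<le> l * (N + card {i. s + N \<le> i \<and> i < T \<and> ?P i})"
        using c l by (intro mult_left_mono) auto
      also have "\<dots> = l * N + l * card {i. s + N \<le> i \<and> i < T \<and> ?P i}" by (simp add: algebra_simps)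
      also have "\<dots> \<le> (\<Sum>m\<in>{s..<T+L}. a m)" using sumN IH split by linarith
      finally show ?thesis .
    qed
  qed
qed

lemma weak11:
  fixes a :: "nat \<Rightarrow> real"
  assumes l: "l > 0" and a: "\<And>m. a m \<ge> 0"
  shows "l * card {i. i < T \<and> (\<exists>N\<in>{1..L}. avg a N i > l)} \<le> (\<Sum>m<T+L. a m)"
  using weak11_gen[OF assms, of 0 T L] by (simp add: atLeast0LessThan)



definition MaxF :: "(nat \<Rightarrow> real) \<Rightarrow> nat \<Rightarrow> nat \<Rightarrow> real" where
  "MaxF a L i = Max ((\<lambda>N. avg a N i) ` {1..L})"

lemma avg_nonneg: "(\<And>m. a m \<ge> 0) \<Longrightarrow> avg a N i \<ge> 0"
  unfolding avg_def by (intro divide_nonneg_nonneg sum_nonneg) auto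

lemma MaxF_nonneg: assumes "L \<ge> 1" "\<And>m. a m \<ge> 0" shows "MaxF a L i \<ge> 0"
proof -
  have "avg a 1 i \<le> MaxF a L i" unfolding MaxF_def using assms by (intro Max_ge) auto
  moreover have "avg a 1 i \<ge> 0" using avg_nonneg assms by blast
  ultimately show ?thesis by linarith
qed

lemma MaxF_gt: assumes "L \<ge> 1" "MaxF a L i > l" shows "\<exists>N\<in>{1..L}. avg a N i > l"
proof -
  have "MaxF a L i \<in> (\<lambda>N. avg a N i) ` {1..L}" unfolding MaxF_def using assms(1)
    by (intro Max_in) auto
  then show ?thesis using assms(2) by auto
qed

lemma layer_cake_pt:
  fixes t p :: real assumes "t \<ge> 0" "p > 0"
  shows "ennreal (t powr p) = (\<integral>\<^sup>+ l. ennreal (p * (indicator {0..<t} l * l powr (p - 1))) \<partial>lborel)"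
proof -
  have "(\<integral>\<^sup>+ l. ennreal (p * (indicator {0..<t} l * l powr (p - 1))) \<partial>lborel)
      = ennreal p * (\<integral>\<^sup>+ l. ennreal (indicator {0..<t} l * l powr (p - 1)) \<partial>lborel)"
    using assms by (simp add: ennreal_mult nn_integral_cmult)
  also have "\<dots> = ennreal p * ennreal (t powr p / p)" using powr_nn_integral assms by simp
  also have "\<dots> = ennreal (t powr p)" using assms by (simp add: ennreal_mult[symmetric])
  finally show ?thesis by simp
qed

lemma pointwise_bound:
  fixes a :: "nat \<Rightarrow> real"
  assumes p: "p > 1" and L: "L \<ge> 1" and a: "\<And>m. a m \<ge> 0"
  shows "(\<Sum>i<T. p * (indicator {0..<MaxF a L i} l * l powr (p - 1)))
     \<le> (\<Sum>m<T+L. 2 * p * a m * (indicator {0..<2 * a m} l * l powr (p - 2)))"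
proof (cases "l > 0")
  case False
  then have "l powr (p - 1) = 0 \<or> l < 0" by auto
  then have "(\<Sum>i<T. p * (indicator {0..<MaxF a L i} l * l powr (p - 1))) = 0"
    by (auto simp: indicator_def)
  moreover have "(\<Sum>m<T+L. 2 * p * a m * (indicator {0..<2 * a m} l * l powr (p - 2))) \<ge> 0"
    using p a by (intro sum_nonneg) (auto simp: indicator_def)
  ultimately show ?thesis by simp
next
  case l: True
  define b where "b m = (if a m > l / 2 then a m else 0)" for m
  have b0: "b m \<ge> 0" for m using a by (simp add: b_def)
  have sub: "{i. i < T \<and> l < MaxF a L i} \<subseteq> {i. i < T \<and> (\<exists>N\<in>{1..L}. avg b N i > l / 2)}"
  proof safe
    fix i assume "i < T" "l < MaxF a L i"
    then obtain N where N: "N \<in> {1..L}" "avg a N i > l" using MaxF_gt[OF L] by blast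
    have "(\<Sum>m<N. a (i + m)) \<le> (\<Sum>m<N. b (i + m) + l / 2)"
      using l by (intro sum_mono) (auto simp: b_def)
    also have "\<dots> = (\<Sum>m<N. b (i + m)) + N * (l / 2)" by (simp add: sum.distrib)
    finally have "avg a N i \<le> avg b N i + l / 2"
      using N unfolding avg_def by (simp add: field_simps)
    then show "\<exists>N\<in>{1..L}. avg b N i > l / 2" using N by (intro bexI[of _ N]) auto
  qed
  have "(l / 2) * card {i. i < T \<and> (\<exists>N\<in>{1..L}. avg b N i > l / 2)} \<le> (\<Sum>m<T+L. b m)"
    by (rule weak11) (use l b0 in auto)
  moreover have "card {i. i < T \<and> l < MaxF a L i} \<le> card {i. i < T \<and> (\<exists>N\<in>{1..L}. avg b N i > l / 2)}"
    by (rule card_mono[OF _ sub]) auto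
  ultimately have cb: "(l / 2) * card {i. i < T \<and> l < MaxF a L i} \<le> (\<Sum>m<T+L. b m)"
    using l by (meson order_trans mult_left_mono of_nat_mono less_imp_le half_gt_zero)
  have seteq: "{i\<in>{..<T}. l < MaxF a L i} = {i. i < T \<and> l < MaxF a L i}" by auto
  have "(\<Sum>i<T. p * (indicator {0..<MaxF a L i} l * l powr (p - 1)))
      = (\<Sum>i<T. if l < MaxF a L i then p * l powr (p - 1) else 0)"
    using l by (intro sum.cong) (auto simp: indicator_def)
  also have "\<dots> = (\<Sum>i\<in>{i. i < T \<and> l < MaxF a L i}. p * l powr (p - 1))"
    unfolding seteq[symmetric] by (rule sum.inter_filter[symmetric]) simp
  also have "\<dots> = p * l powr (p - 1) * card {i. i < T \<and> l < MaxF a L i}" by simp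
  also have "\<dots> = 2 * p * l powr (p - 2) * ((l / 2) * card {i. i < T \<and> l < MaxF a L i})"
  proof -
    have "l powr (p - 1) = l powr ((p - 2) + 1)" by simp
    also have "\<dots> = l powr (p - 2) * l" using l by (simp only: powr_add) simp
    finally show ?thesis by simp
  qed
  also have "\<dots> \<le> 2 * p * l powr (p - 2) * (\<Sum>m<T+L. b m)"
    using cb p l by (intro mult_left_mono) auto
  also have "\<dots> = (\<Sum>m<T+L. 2 * p * l powr (p - 2) * b m)" by (simp add: sum_distrib_left)
  also have "\<dots> = (\<Sum>m<T+L. 2 * p * a m * (indicator {0..<2 * a m} l * l powr (p - 2)))"
    using l by (intro sum.cong) (auto simp: b_def indicator_def)
  finally show ?thesis .
qed

lemma discrete_max:
  fixes a :: "nat \<Rightarrow> real"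
  assumes p: "p > 1" and L: "L \<ge> 1" and a: "\<And>m. a m \<ge> 0"
  shows "(\<Sum>i<T. ennreal (MaxF a L i powr p))
     \<le> ennreal (2 powr p * p / (p - 1)) * (\<Sum>m<T+L. ennreal (a m powr p))"
proof -
  have M0: "MaxF a L i \<ge> 0" for i by (rule MaxF_nonneg[OF L]) (rule a)
  have "(\<Sum>i<T. ennreal (MaxF a L i powr p))
      = (\<Sum>i<T. \<integral>\<^sup>+ l. ennreal (p * (indicator {0..<MaxF a L i} l * l powr (p - 1))) \<partial>lborel)"
    using layer_cake_pt M0 p by simp
  also have "\<dots> = (\<integral>\<^sup>+ l. (\<Sum>i<T. ennreal (p * (indicator {0..<MaxF a L i} l * l powr (p - 1)))) \<partial>lborel)"
    by (rule nn_integral_sum[symmetric]) simp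
  also have "\<dots> = (\<integral>\<^sup>+ l. ennreal (\<Sum>i<T. p * (indicator {0..<MaxF a L i} l * l powr (p - 1))) \<partial>lborel)"
    using p by (intro nn_integral_cong sum_ennreal) auto
  also have "\<dots> \<le> (\<integral>\<^sup>+ l. ennreal (\<Sum>m<T+L. 2 * p * a m * (indicator {0..<2 * a m} l * l powr (p - 2))) \<partial>lborel)"
    by (intro nn_integral_mono ennreal_leI pointwise_bound p L a)
  also have "\<dots> = (\<integral>\<^sup>+ l. (\<Sum>m<T+L. ennreal (2 * p * a m) * ennreal (indicator {0..<2 * a m} l * l powr (p - 2))) \<partial>lborel)"
    using p a by (intro nn_integral_cong) (simp add: sum_ennreal[symmetric] ennreal_mult[symmetric] del: sum_ennreal)
  also have "\<dots> = (\<Sum>m<T+L. \<integral>\<^sup>+ l. ennreal (2 * p * a m) * ennreal (indicator {0..<2 * a m} l * l powr (p - 2)) \<partial>lborel)"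
    by (rule nn_integral_sum) simp
  also have "\<dots> = (\<Sum>m<T+L. ennreal (2 * p * a m) * ennreal ((2 * a m) powr (p - 1) / (p - 1)))"
  proof (intro sum.cong refl)
    fix m
    have "(\<integral>\<^sup>+ l. ennreal (indicator {0..<2 * a m} l * l powr (p - 1 - 1)) \<partial>lborel) = ennreal ((2 * a m) powr (p - 1) / (p - 1))"
      by (rule powr_nn_integral) (use a p in auto)
    then show "(\<integral>\<^sup>+ l. ennreal (2 * p * a m) * ennreal (indicator {0..<2 * a m} l * l powr (p - 2)) \<partial>lborel) = ennreal (2 * p * a m) * ennreal ((2 * a m) powr (p - 1) / (p - 1))"
      by (simp add: nn_integral_cmult)
  qed
  also have "\<dots> = (\<Sum>m<T+L. ennreal (2 powr p * p / (p - 1)) * ennreal (a m powr p))"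
  proof (intro sum.cong refl)
    fix m
    have "2 * p * a m * ((2 * a m) powr (p - 1) / (p - 1)) = 2 powr p * p / (p - 1) * a m powr p"
    proof (cases "a m = 0")
      case True then show ?thesis by simp
    next
      case False
      then have am: "a m > 0" using a[of m] by simp
      have "(2 * a m) powr (p - 1) = 2 powr (p - 1) * a m powr (p - 1)" using am by (simp add: powr_mult)
      moreover have "2 powr (p - 1) = 2 powr p / 2" by (simp add: powr_diff)
      moreover have "a m powr (p - 1) = a m powr p / a m" using am by (simp add: powr_diff)
      ultimately show ?thesis using am p by (simp add: field_simps)
    qed
    then show "ennreal (2 * p * a m) * ennreal ((2 * a m) powr (p - 1) / (p - 1)) = ennreal (2 powr p * p / (p - 1)) * ennreal (a m powr p)"
      using a[of m] p by (simp add: ennreal_mult[symmetric])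
  qed
  also have "\<dots> = ennreal (2 powr p * p / (p - 1)) * (\<Sum>m<T+L. ennreal (a m powr p))"
    by (simp only: sum_distrib_left)
  finally show ?thesis .
qed



lemma nn_integral_translate:
  fixes c :: "'a::euclidean_space"
  assumes [measurable]: "F \<in> borel_measurable borel"
  shows "(\<integral>\<^sup>+ y. F (c + y) \<partial>lborel) = (\<integral>\<^sup>+ y. F y \<partial>lborel)"
proof -
  have "(\<integral>\<^sup>+ y. F y \<partial>lborel) = (\<integral>\<^sup>+ y. F y \<partial>(distr lborel borel ((+) c)))"
    by (simp add: lborel_distr_plus)
  also have "\<dots> = (\<integral>\<^sup>+ y. F (c + y) \<partial>lborel)"
    by (subst nn_integral_distr) auto
  finally show ?thesis by simp
qed

definition Ddisc :: "('a::euclidean_space \<Rightarrow> real) \<Rightarrow> 'a \<Rightarrow> nat \<Rightarrow> 'a \<Rightarrow> real" where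
  "Ddisc G w L y = MaxF (\<lambda>m. G (y - real m *\<^sub>R w)) L 0"

lemma MaxF_shift: "MaxF (\<lambda>m. a (i + m)) L 0 = MaxF a L i"
  unfolding MaxF_def avg_def by simp

lemma Ddisc_measurable[measurable]:
  assumes [measurable]: "G \<in> borel_measurable borel"
  shows "Ddisc G w L \<in> borel_measurable borel"
  unfolding Ddisc_def MaxF_def avg_def by measurable

lemma limit_arg:
  fixes I C Q :: ennreal
  assumes "\<And>T::nat. T \<ge> 1 \<Longrightarrow> of_nat T * I \<le> C * (of_nat (T + L) * Q)"
  shows "I \<le> C * Q"
proof (cases "C * Q = top")
  case True then show ?thesis by simp
next
  case False
  then obtain r where r: "C * Q = ennreal r" "r \<ge> 0" by (cases "C * Q") auto
  have h: "of_nat T * I \<le> ennreal r * of_nat (T + L)" if "T \<ge> 1" for T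
  proof -
    have "of_nat T * I \<le> C * (of_nat (T + L) * Q)" using assms[OF that] .
    also have "\<dots> = (C * Q) * of_nat (T + L)" by (simp only: mult_ac)
    finally show ?thesis using r by simp
  qed
  have "I \<noteq> top"
  proof
    assume "I = top"
    then have "top \<le> ennreal r * of_nat (1 + L)" using h[of 1] by simp
    moreover have "ennreal r * of_nat (1 + L) < top"
      by (simp only: ennreal_mult_less_top of_nat_less_top) simp
    ultimately show False by simp
  qed
  then obtain i where i: "I = ennreal i" "i \<ge> 0" by (cases I) auto
  have hr: "real T * i \<le> r * real (T + L)" if "T \<ge> 1" for T
  proof -
    have "ennreal (real T * i) \<le> ennreal (r * real (T + L))"
      using h[OF that] i r by (simp add: ennreal_of_nat_eq_real_of_nat ennreal_mult[symmetric] del: of_nat_add)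
    moreover have "r * real (T + L) \<ge> 0" using r by simp
    ultimately show ?thesis using r by (auto simp add: ennreal_le_iff2 simp del: of_nat_add)
  qed
  have "i \<le> r"
  proof (rule ccontr)
    assume "\<not> i \<le> r"
    then have "i - r > 0" by simp
    then obtain n where n: "r * real L < real n * (i - r)" using ex_less_of_nat_mult by blast
    define T where "T = max n 1"
    have "r * real L < real T * (i - r)"
      using n \<open>i - r > 0\<close> unfolding T_def
      by (smt (verit) mult_right_mono of_nat_le_iff max.cobounded1)
    moreover have "real T * i \<le> r * real (T + L)" using hr[of T] unfolding T_def by simp
    ultimately show False by (simp add: algebra_simps)
  qed
  then show ?thesis using i r by simp
qed

lemma transference:
  fixes G :: "'a::euclidean_space \<Rightarrow> real"
  assumes p: "p > 1" and L: "L \<ge> 1" and G[measurable]: "G \<in> borel_measurable borel"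
    and G0: "\<And>y. G y \<ge> 0"
  shows "(\<integral>\<^sup>+ y. ennreal (Ddisc G w L y powr p) \<partial>lborel)
      \<le> ennreal (2 powr p * p / (p - 1)) * (\<integral>\<^sup>+ y. ennreal (G y powr p) \<partial>lborel)"
proof (rule limit_arg)
  fix T :: nat assume T: "T \<ge> 1"
  define I where "I = (\<integral>\<^sup>+ y. ennreal (Ddisc G w L y powr p) \<partial>lborel)"
  define Q where "Q = (\<integral>\<^sup>+ y. ennreal (G y powr p) \<partial>lborel)"
  define C where "C = ennreal (2 powr p * p / (p - 1))"
  have tr1: "(\<integral>\<^sup>+ y. ennreal (Ddisc G w L (y - real i *\<^sub>R w) powr p) \<partial>lborel) = I" for i
    unfolding I_def using nn_integral_translate[of "\<lambda>y. ennreal (Ddisc G w L y powr p)" "- (real i *\<^sub>R w)"]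
    by simp
  have tr2: "(\<integral>\<^sup>+ y. ennreal (G (y - real m *\<^sub>R w) powr p) \<partial>lborel) = Q" for m
    unfolding Q_def using nn_integral_translate[of "\<lambda>y. ennreal (G y powr p)" "- (real m *\<^sub>R w)"]
    by simp
  have eqD: "Ddisc G w L (y - real i *\<^sub>R w) = MaxF (\<lambda>m. G (y - real m *\<^sub>R w)) L i" for y i
  proof -
    have "Ddisc G w L (y - real i *\<^sub>R w) = MaxF (\<lambda>m. G (y - real (i + m) *\<^sub>R w)) L 0"
      unfolding Ddisc_def by (simp add: algebra_simps)
    also have "\<dots> = MaxF (\<lambda>m. G (y - real m *\<^sub>R w)) L i" by (rule MaxF_shift)
    finally show ?thesis .
  qed
  have "of_nat T * I = (\<Sum>i<T. \<integral>\<^sup>+ y. ennreal (Ddisc G w L (y - real i *\<^sub>R w) powr p) \<partial>lborel)"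
    by (simp add: tr1)
  also have "\<dots> = (\<integral>\<^sup>+ y. (\<Sum>i<T. ennreal (Ddisc G w L (y - real i *\<^sub>R w) powr p)) \<partial>lborel)"
    by (rule nn_integral_sum[symmetric]) simp
  also have "\<dots> \<le> (\<integral>\<^sup>+ y. C * (\<Sum>m<T+L. ennreal (G (y - real m *\<^sub>R w) powr p)) \<partial>lborel)"
  proof (rule nn_integral_mono)
    fix y
    show "(\<Sum>i<T. ennreal (Ddisc G w L (y - real i *\<^sub>R w) powr p)) \<le> C * (\<Sum>m<T+L. ennreal (G (y - real m *\<^sub>R w) powr p))"
      unfolding eqD C_def by (rule discrete_max[OF p L G0])
  qed
  also have "\<dots> = C * (\<Sum>m<T+L. \<integral>\<^sup>+ y. ennreal (G (y - real m *\<^sub>R w) powr p) \<partial>lborel)"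
    unfolding C_def by (subst nn_integral_cmult) (simp, subst nn_integral_sum, auto simp del: sum_ennreal)
  also have "\<dots> = C * (of_nat (T + L) * Q)" by (simp add: tr2)
  finally show "of_nat T * I \<le> C * (of_nat (T + L) * Q)" .
qed



definition Bv :: "('a::euclidean_space \<Rightarrow> real) \<Rightarrow> 'a \<Rightarrow> 'a \<Rightarrow> ennreal" where
  "Bv G v x = (\<integral>\<^sup>+ t. ennreal (G (x - t *\<^sub>R v)) * indicator {1..2} t \<partial>lborel)"

definition Dinf :: "('a::euclidean_space \<Rightarrow> real) \<Rightarrow> 'a \<Rightarrow> 'a \<Rightarrow> ennreal" where
  "Dinf G w y = (SUP L. ennreal (Ddisc G w (Suc L) y))"

lemma Bv_measurable[measurable]:
  assumes [measurable]: "G \<in> borel_measurable borel"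
  shows "(\<lambda>x. Bv G v x) \<in> borel_measurable borel"
  unfolding Bv_def by measurable

lemma Dinf_measurable[measurable]:
  assumes [measurable]: "G \<in> borel_measurable borel"
  shows "Dinf G w \<in> borel_measurable borel"
  unfolding Dinf_def by measurable

lemma nn_integral_real_scale:
  fixes c :: real
  assumes c: "c > 0" and [measurable]: "F \<in> borel_measurable borel"
  shows "(\<integral>\<^sup>+ s. F s \<partial>lborel) = ennreal c * (\<integral>\<^sup>+ t. F (c * t) \<partial>lborel)"
proof -
  have "(\<integral>\<^sup>+ s. F s \<partial>lborel) = (\<integral>\<^sup>+ s. F s \<partial>(density (distr lborel borel (\<lambda>x. 0 + c * x)) (\<lambda>_. ennreal \<bar>c\<bar>)))"
    using lborel_real_affine[of c 0] c by simp
  also have "\<dots> = (\<integral>\<^sup>+ s. ennreal c * F s \<partial>(distr lborel borel (\<lambda>x. 0 + c * x)))"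
    using c by (subst nn_integral_density) auto
  also have "\<dots> = (\<integral>\<^sup>+ t. ennreal c * F (c * t) \<partial>lborel)"
    by (subst nn_integral_distr) auto
  also have "\<dots> = ennreal c * (\<integral>\<^sup>+ t. F (c * t) \<partial>lborel)"
    by (rule nn_integral_cmult) simp
  finally show ?thesis .
qed

lemma nn_integral_real_translate:
  fixes c :: real
  assumes [measurable]: "F \<in> borel_measurable borel"
  shows "(\<integral>\<^sup>+ u. F (c + u) \<partial>lborel) = (\<integral>\<^sup>+ s. F s \<partial>lborel)"
  using nn_integral_translate[of F c] by simp

lemma cover_unit:
  fixes s :: real and K :: nat
  assumes "0 \<le> s" "s \<le> real K" "K \<ge> 1"
  shows "\<exists>m<K. s \<in> {real m..real m + 1}"
proof -
  define m where "m = min (nat \<lfloor>s\<rfloor>) (K - 1)"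
  have "m < K" using assms unfolding m_def by simp
  moreover have "s \<in> {real m..real m + 1}"
  proof (cases "nat \<lfloor>s\<rfloor> \<le> K - 1")
    case True
    then have "m = nat \<lfloor>s\<rfloor>" unfolding m_def by simp
    then show ?thesis using assms by (simp add: of_nat_nat)
  next
    case False
    then have m: "m = K - 1" unfolding m_def by simp
    have "real (nat \<lfloor>s\<rfloor>) \<le> s" using assms by (simp add: of_nat_nat)
    then have "real m \<le> s" using False m by linarith
    moreover have "real m + 1 = real K" using m assms by simp
    ultimately show ?thesis using assms by simp
  qed
  ultimately show ?thesis by blast
qed

lemma Bv_dyadic_bound:
  fixes G :: "'a::euclidean_space \<Rightarrow> real"
  assumes G[measurable]: "G \<in> borel_measurable borel" and G0: "\<And>y. G y \<ge> 0"
  shows "Bv G ((2::real)^j *\<^sub>R w) x \<le> 2 * (\<integral>\<^sup>+u. indicator {0..1} u * Dinf G w (x - u *\<^sub>R w) \<partial>lborel)"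
proof -
  define c :: real where "c = 2^j"
  define K :: nat where "K = 2^(j+1)"
  have c0: "c > 0" unfolding c_def by simp
  have K1: "K \<ge> 1" unfolding K_def by simp
  have Kc: "real K = 2 * c" unfolding K_def c_def by simp
  define F where "F s = ennreal (G (x - s *\<^sub>R w)) * indicator {c..2*c} s" for s
  have Fm[measurable]: "F \<in> borel_measurable borel" unfolding F_def by measurable
  have step1: "(\<integral>\<^sup>+ s. F s \<partial>lborel) = ennreal c * Bv G (c *\<^sub>R w) x"
  proof -
    have "(\<integral>\<^sup>+ s. F s \<partial>lborel) = ennreal c * (\<integral>\<^sup>+ t. F (c * t) \<partial>lborel)"
      by (rule nn_integral_real_scale[OF c0 Fm])
    also have "(\<lambda>t. F (c * t)) = (\<lambda>t. ennreal (G (x - t *\<^sub>R (c *\<^sub>R w))) * indicator {1..2} t)"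
    proof
      fix t
      have "c * t \<in> {c..2*c} \<longleftrightarrow> t \<in> {1..2}" using c0 by auto
      then show "F (c * t) = ennreal (G (x - t *\<^sub>R (c *\<^sub>R w))) * indicator {1..2} t"
        unfolding F_def by (simp add: indicator_def mult.commute)
    qed
    finally show ?thesis unfolding Bv_def by simp
  qed
  define a where "a y m = G (y - real m *\<^sub>R w)" for y m
  have step2: "F s \<le> (\<Sum>m<K. ennreal (G (x - s *\<^sub>R w)) * indicator {real m..real m + 1} s)" for s
  proof (cases "s \<in> {c..2*c}")
    case True
    then obtain m where m: "m < K" "s \<in> {real m..real m + 1}"
      using cover_unit[of s K] K1 Kc c0 by auto
    have "F s = ennreal (G (x - s *\<^sub>R w)) * indicator {real m..real m + 1} s"
      unfolding F_def using True m by simp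
    also have "\<dots> \<le> (\<Sum>m<K. ennreal (G (x - s *\<^sub>R w)) * indicator {real m..real m + 1} s)"
      by (rule member_le_sum) (use m in auto)
    finally show ?thesis .
  qed (simp add: F_def)
  have step3: "(\<integral>\<^sup>+ s. ennreal (G (x - s *\<^sub>R w)) * indicator {real m..real m + 1} s \<partial>lborel)
      = (\<integral>\<^sup>+ u. indicator {0..1} u * ennreal (a (x - u *\<^sub>R w) m) \<partial>lborel)" for m
  proof -
    have "(\<integral>\<^sup>+ s. ennreal (G (x - s *\<^sub>R w)) * indicator {real m..real m + 1} s \<partial>lborel)
      = (\<integral>\<^sup>+ u. ennreal (G (x - (real m + u) *\<^sub>R w)) * indicator {real m..real m + 1} (real m + u) \<partial>lborel)"
      by (rule nn_integral_real_translate[symmetric]) measurable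
    also have "\<dots> = (\<integral>\<^sup>+ u. indicator {0..1} u * ennreal (a (x - u *\<^sub>R w) m) \<partial>lborel)"
      unfolding a_def by (intro nn_integral_cong) (simp add: indicator_def algebra_simps)
    finally show ?thesis .
  qed
  have step5: "(\<Sum>m<K. ennreal (a y m)) \<le> of_nat K * Dinf G w y" for y
  proof -
    have "(\<Sum>m<K. ennreal (a y m)) = ennreal (real K * avg (a y) K 0)"
      using K1 G0 unfolding avg_def a_def by simp
    also have "\<dots> \<le> ennreal (real K * Ddisc G w K y)"
    proof (intro ennreal_leI mult_left_mono)
      show "avg (a y) K 0 \<le> Ddisc G w K y"
        unfolding Ddisc_def MaxF_def a_def using K1 by (intro Max_ge) auto
    qed simp
    also have "\<dots> = of_nat K * ennreal (Ddisc G w K y)"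
      using MaxF_nonneg[OF K1, of "a y" 0] G0 unfolding Ddisc_def a_def
      by (simp add: ennreal_mult ennreal_of_nat_eq_real_of_nat)
    also have "ennreal (Ddisc G w K y) \<le> Dinf G w y"
    proof -
      have "ennreal (Ddisc G w (Suc (K - 1)) y) \<le> Dinf G w y" unfolding Dinf_def by (rule SUP_upper) simp
      then show ?thesis using K1 by simp
    qed
    finally show ?thesis by (simp add: mult_left_mono)
  qed
  have "ennreal c * Bv G (c *\<^sub>R w) x = (\<integral>\<^sup>+ s. F s \<partial>lborel)" using step1 by simp
  also have "\<dots> \<le> (\<integral>\<^sup>+ s. (\<Sum>m<K. ennreal (G (x - s *\<^sub>R w)) * indicator {real m..real m + 1} s) \<partial>lborel)"
    by (rule nn_integral_mono) (rule step2)
  also have "\<dots> = (\<Sum>m<K. \<integral>\<^sup>+ s. ennreal (G (x - s *\<^sub>R w)) * indicator {real m..real m + 1} s \<partial>lborel)"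
    by (rule nn_integral_sum) simp
  also have "\<dots> = (\<Sum>m<K. \<integral>\<^sup>+ u. indicator {0..1} u * ennreal (a (x - u *\<^sub>R w) m) \<partial>lborel)"
    by (simp only: step3)
  also have "\<dots> = (\<integral>\<^sup>+ u. (\<Sum>m<K. indicator {0..1} u * ennreal (a (x - u *\<^sub>R w) m)) \<partial>lborel)"
    by (rule nn_integral_sum[symmetric]) (simp add: a_def)
  also have "\<dots> \<le> (\<integral>\<^sup>+ u. indicator {0..1} u * (of_nat K * Dinf G w (x - u *\<^sub>R w)) \<partial>lborel)"
  proof (rule nn_integral_mono)
    fix u
    have "(\<Sum>m<K. indicator {0..1} u * ennreal (a (x - u *\<^sub>R w) m)) = indicator {0..1} u * (\<Sum>m<K. ennreal (a (x - u *\<^sub>R w) m))"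
      by (simp only: sum_distrib_left)
    also have "\<dots> \<le> indicator {0..1} u * (of_nat K * Dinf G w (x - u *\<^sub>R w))"
      by (intro mult_left_mono step5) simp
    finally show "(\<Sum>m<K. indicator {0..1} u * ennreal (a (x - u *\<^sub>R w) m)) \<le> indicator {0..1} u * (of_nat K * Dinf G w (x - u *\<^sub>R w))" .
  qed
  also have "\<dots> = of_nat K * (\<integral>\<^sup>+u. indicator {0..1} u * Dinf G w (x - u *\<^sub>R w) \<partial>lborel)"
    by (subst nn_integral_cmult[symmetric]) (auto simp: mult_ac)
  also have "of_nat K = ennreal c * 2" using Kc c0 by (simp add: ennreal_of_nat_eq_real_of_nat ennreal_mult mult.commute)
  finally have "ennreal c * Bv G (c *\<^sub>R w) x \<le> ennreal c * (2 * (\<integral>\<^sup>+u. indicator {0..1} u * Dinf G w (x - u *\<^sub>R w) \<partial>lborel))"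
    by (simp add: mult_ac)
  then show ?thesis using c0 unfolding c_def by (simp add: ennreal_mult_le_mult_iff)
qed



lemma Ddisc_mono: assumes "1 \<le> L" "L \<le> L'" shows "Ddisc G w L y \<le> Ddisc G w L' y"
  unfolding Ddisc_def MaxF_def using assms by (intro Max_mono) auto

lemma Dinf_bound:
  fixes G :: "'a::euclidean_space \<Rightarrow> real"
  assumes p: "p > 1" and G[measurable]: "G \<in> borel_measurable borel" and G0: "\<And>y. G y \<ge> 0"
  shows "(\<integral>\<^sup>+ y. enn_powr (Dinf G w y) p \<partial>lborel)
      \<le> ennreal (2 powr p * p / (p - 1)) * (\<integral>\<^sup>+ y. ennreal (G y powr p) \<partial>lborel)"
proof -
  have p0: "p > 0" using p by simp
  have nn: "Ddisc G w (Suc L) y \<ge> 0" for L y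
    unfolding Ddisc_def by (rule MaxF_nonneg) (auto simp: G0)
  have "(\<integral>\<^sup>+ y. enn_powr (Dinf G w y) p \<partial>lborel)
     = (\<integral>\<^sup>+ y. (SUP L. ennreal (Ddisc G w (Suc L) y powr p)) \<partial>lborel)"
    unfolding Dinf_def by (simp add: enn_powr_Sup[OF p0] image_comp enn_powr_ennreal nn)
  also have "\<dots> = (SUP L. \<integral>\<^sup>+ y. ennreal (Ddisc G w (Suc L) y powr p) \<partial>lborel)"
  proof (rule nn_integral_monotone_convergence_SUP)
    show "incseq (\<lambda>L y. ennreal (Ddisc G w (Suc L) y powr p))"
      by (auto simp: incseq_def le_fun_def intro!: ennreal_leI powr_mono2 Ddisc_mono nn p0[THEN less_imp_le])
  qed simp
  also have "\<dots> \<le> ennreal (2 powr p * p / (p - 1)) * (\<integral>\<^sup>+ y. ennreal (G y powr p) \<partial>lborel)"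
    by (rule SUP_least) (rule transference[OF p _ G G0], simp)
  finally show ?thesis .
qed

lemma jensen_unit:
  assumes p: "p > 1" and [measurable]: "h \<in> borel_measurable (lborel :: real measure)"
  shows "enn_powr (\<integral>\<^sup>+u. indicator {0..1} u * h u \<partial>lborel) p
     \<le> (\<integral>\<^sup>+u. indicator {0..1} u * enn_powr (h u) p \<partial>lborel)"
proof -
  define M where "M = density (lborel :: real measure) (indicator {0..1})"
  have int: "(\<integral>\<^sup>+u. f u \<partial>M) = (\<integral>\<^sup>+u. indicator {0..1} u * f u \<partial>lborel)"
    if [measurable]: "f \<in> borel_measurable borel" for f
    unfolding M_def by (subst nn_integral_density) auto
  have W: "emeasure M (space M) = 1"
    unfolding M_def by (simp add: emeasure_density)
  have "enn_powr (\<integral>\<^sup>+u. h u \<partial>M) p \<le> enn_powr (emeasure M (space M)) (p - 1) * (\<integral>\<^sup>+u. enn_powr (h u) p \<partial>M)"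
    by (rule enn_jensen[OF p]) (simp add: M_def)
  then show ?thesis using W by (simp add: int)
qed

lemma dir_max_nat:
  fixes G :: "'a::euclidean_space \<Rightarrow> real"
  assumes p: "p > 1" and G[measurable]: "G \<in> borel_measurable borel" and G0: "\<And>y. G y \<ge> 0"
  shows "(\<integral>\<^sup>+ x. enn_powr (SUP j::nat. Bv G ((2::real)^j *\<^sub>R w) x) p \<partial>lborel)
      \<le> ennreal (2 powr p) * (ennreal (2 powr p * p / (p - 1)) * (\<integral>\<^sup>+ y. ennreal (G y powr p) \<partial>lborel))"
proof -
  have p0: "p > 0" using p by simp
  define J where "J x = (\<integral>\<^sup>+u. indicator {0..1} u * Dinf G w (x - u *\<^sub>R w) \<partial>lborel)" for x
  define D where "D = (\<integral>\<^sup>+ y. enn_powr (Dinf G w y) p \<partial>lborel)"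
  have pt: "enn_powr (SUP j::nat. Bv G ((2::real)^j *\<^sub>R w) x) p
      \<le> ennreal (2 powr p) * (\<integral>\<^sup>+u. indicator {0..1} u * enn_powr (Dinf G w (x - u *\<^sub>R w)) p \<partial>lborel)" for x
  proof -
    have "(SUP j::nat. Bv G ((2::real)^j *\<^sub>R w) x) \<le> 2 * J x"
      unfolding J_def by (rule SUP_least) (rule Bv_dyadic_bound[OF G G0])
    then have "enn_powr (SUP j::nat. Bv G ((2::real)^j *\<^sub>R w) x) p \<le> enn_powr (2 * J x) p"
      by (rule enn_powr_mono[OF p0])
    also have "\<dots> = ennreal (2 powr p) * enn_powr (J x) p"
      using enn_powr_mult[OF p0, of 2 "J x"] enn_powr_ennreal[of 2 p] by simp
    also have "\<dots> \<le> ennreal (2 powr p) * (\<integral>\<^sup>+u. indicator {0..1} u * enn_powr (Dinf G w (x - u *\<^sub>R w)) p \<partial>lborel)"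
      unfolding J_def by (intro mult_left_mono jensen_unit[OF p]) auto
    finally show ?thesis .
  qed
  have "(\<integral>\<^sup>+ x. enn_powr (SUP j::nat. Bv G ((2::real)^j *\<^sub>R w) x) p \<partial>lborel)
     \<le> (\<integral>\<^sup>+ x. ennreal (2 powr p) * (\<integral>\<^sup>+u. indicator {0..1} u * enn_powr (Dinf G w (x - u *\<^sub>R w)) p \<partial>lborel) \<partial>lborel)"
    by (rule nn_integral_mono) (rule pt)
  also have "\<dots> = ennreal (2 powr p) * (\<integral>\<^sup>+ x. (\<integral>\<^sup>+u. indicator {0..1} u * enn_powr (Dinf G w (x - u *\<^sub>R w)) p \<partial>lborel) \<partial>lborel)"
    by (rule nn_integral_cmult) measurable
  also have "(\<integral>\<^sup>+ x. (\<integral>\<^sup>+u. indicator {0..1} u * enn_powr (Dinf G w (x - u *\<^sub>R w)) p \<partial>lborel) \<partial>lborel)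
      = (\<integral>\<^sup>+ u. (\<integral>\<^sup>+x. indicator {0..1} u * enn_powr (Dinf G w (x - u *\<^sub>R w)) p \<partial>lborel) \<partial>lborel)"
    by (rule lborel_pair.Fubini'[symmetric]) measurable
  also have "\<dots> = (\<integral>\<^sup>+ u. indicator {0..1::real} u * D \<partial>lborel)"
  proof (rule nn_integral_cong)
    fix u :: real
    have "(\<integral>\<^sup>+x. enn_powr (Dinf G w (x - u *\<^sub>R w)) p \<partial>lborel) = D"
      unfolding D_def using nn_integral_translate[of "\<lambda>y. enn_powr (Dinf G w y) p" "- (u *\<^sub>R w)"]
      by simp
    then show "(\<integral>\<^sup>+x. indicator {0..1} u * enn_powr (Dinf G w (x - u *\<^sub>R w)) p \<partial>lborel) = indicator {0..1} u * D"
      by (subst nn_integral_cmult) auto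
  qed
  also have "\<dots> = D" by (simp add: nn_integral_multc)
  finally have "(\<integral>\<^sup>+ x. enn_powr (SUP j::nat. Bv G ((2::real)^j *\<^sub>R w) x) p \<partial>lborel) \<le> ennreal (2 powr p) * D" .
  also have "\<dots> \<le> ennreal (2 powr p) * (ennreal (2 powr p * p / (p - 1)) * (\<integral>\<^sup>+ y. ennreal (G y powr p) \<partial>lborel))"
    unfolding D_def by (intro mult_left_mono Dinf_bound[OF p G G0]) simp
  finally show ?thesis .
qed

lemma dir_max_int:
  fixes G :: "'a::euclidean_space \<Rightarrow> real"
  assumes p: "p > 1" and G[measurable]: "G \<in> borel_measurable borel" and G0: "\<And>y. G y \<ge> 0"
  shows "(\<integral>\<^sup>+ x. enn_powr (SUP k::int. Bv G ((2 powr real_of_int k) *\<^sub>R \<theta>) x) p \<partial>lborel)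
      \<le> ennreal (2 powr p) * (ennreal (2 powr p * p / (p - 1)) * (\<integral>\<^sup>+ y. ennreal (G y powr p) \<partial>lborel))"
proof -
  have p0: "p > 0" using p by simp
  define f where "f k x = Bv G ((2 powr real_of_int k) *\<^sub>R \<theta>) x" for k x
  define S where "S K x = (SUP j::nat. f (int j - int K) x)" for K x
  have fm[measurable]: "f k \<in> borel_measurable borel" for k unfolding f_def by measurable
  have Sm[measurable]: "S K \<in> borel_measurable borel" for K unfolding S_def by measurable
  have eq: "(SUP k::int. f k x) = (SUP K. S K x)" for x
  proof (rule antisym)
    show "(SUP k::int. f k x) \<le> (SUP K. S K x)"
    proof (rule SUP_least)
      fix k :: int
      define K where "K = nat (- k)"
      define j where "j = nat (k + int K)"
      have "int j - int K = k" unfolding j_def K_def by simp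
      then have "f k x \<le> S K x" unfolding S_def by (metis SUP_upper UNIV_I)
      also have "\<dots> \<le> (SUP K. S K x)" by (rule SUP_upper) simp
      finally show "f k x \<le> (SUP K. S K x)" .
    qed
  next
    show "(SUP K. S K x) \<le> (SUP k::int. f k x)"
      unfolding S_def by (intro SUP_least SUP_upper) simp
  qed
  have inc: "incseq S"
  proof (rule incseq_SucI, rule le_funI)
    fix K x
    show "S K x \<le> S (Suc K) x"
      unfolding S_def
    proof (rule SUP_least)
      fix j :: nat
      have "f (int j - int K) x = f (int (Suc j) - int (Suc K)) x" by simp
      also have "\<dots> \<le> (SUP j::nat. f (int j - int (Suc K)) x)" by (rule SUP_upper) simp
      finally show "f (int j - int K) x \<le> (SUP j::nat. f (int j - int (Suc K)) x)" .
    qed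
  qed
  have Sform: "S K x = (SUP j::nat. Bv G ((2::real)^j *\<^sub>R ((2 powr - real K) *\<^sub>R \<theta>)) x)" for K x
  proof -
    have "2 powr real_of_int (int j - int K) = (2::real)^j * 2 powr - real K" for j
      by (simp add: powr_add[symmetric] powr_realpow[symmetric])
    then show ?thesis unfolding S_def f_def by simp
  qed
  have "(\<integral>\<^sup>+ x. enn_powr (SUP k::int. Bv G ((2 powr real_of_int k) *\<^sub>R \<theta>) x) p \<partial>lborel)
      = (\<integral>\<^sup>+ x. (SUP K. enn_powr (S K x) p) \<partial>lborel)"
    using eq unfolding f_def by (simp add: enn_powr_Sup[OF p0] image_comp)
  also have "\<dots> = (SUP K. \<integral>\<^sup>+ x. enn_powr (S K x) p \<partial>lborel)"
  proof (rule nn_integral_monotone_convergence_SUP)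
    show "incseq (\<lambda>K x. enn_powr (S K x) p)"
      using inc by (auto simp: incseq_def le_fun_def intro!: enn_powr_mono[OF p0])
  qed simp
  also have "\<dots> \<le> ennreal (2 powr p) * (ennreal (2 powr p * p / (p - 1)) * (\<integral>\<^sup>+ y. ennreal (G y powr p) \<partial>lborel))"
    unfolding Sform by (rule SUP_least) (rule dir_max_nat[OF p G G0])
  finally show ?thesis .
qed



definition rcone :: "'a::euclidean_space set \<Rightarrow> 'a set" where
  "rcone B = {z. z \<noteq> 0 \<and> z /\<^sub>R norm z \<in> B}"

lemma nrm_measurable:
  "(\<lambda>x::'a::euclidean_space. x /\<^sub>R norm x) \<in> measurable (restrict_space lborel (ball 0 1 - {0})) (restrict_space borel (sphere 0 1))"
proof (rule measurable_restrict_space2)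
  show "(\<lambda>x::'a. x /\<^sub>R norm x) \<in> space (restrict_space lborel (ball 0 1 - {0})) \<rightarrow> sphere 0 1"
    by (auto simp: space_restrict_space)
  show "(\<lambda>x::'a. x /\<^sub>R norm x) \<in> restrict_space lborel (ball 0 1 - {0}) \<rightarrow>\<^sub>M borel"
    by (rule measurable_restrict_space1) simp
qed

lemma sets_sphere_measure: "sets (sphere_measure :: 'a::euclidean_space measure) = sets (restrict_space borel (sphere (0::'a) 1))"
  unfolding sphere_measure_def by simp

lemma space_sphere_measure: "space (sphere_measure :: 'a::euclidean_space measure) = sphere (0::'a) 1"
  unfolding sphere_measure_def by (simp add: space_restrict_space)

lemma cone_sets: assumes "B \<in> sets (restrict_space borel (sphere (0::'a::euclidean_space) 1))"
  shows "rcone B \<in> sets borel"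
proof -
  obtain B' where B': "B' \<in> sets borel" "B = sphere 0 1 \<inter> B'" using assms by (auto simp: sets_restrict_space)
  have "rcone B = (\<lambda>z. z /\<^sub>R norm z) -` B' \<inter> (- {0})"
    unfolding rcone_def B' by auto
  also have "\<dots> \<in> sets borel" using B'(1) by measurable
  finally show ?thesis .
qed

lemma emeasure_sphere_measure:
  assumes B: "B \<in> sets (sphere_measure :: 'a::euclidean_space measure)"
  shows "emeasure sphere_measure B = of_nat DIM('a) * emeasure lborel (rcone B \<inter> ball 0 1)"
proof -
  let ?R = "restrict_space lborel (ball (0::'a) 1 - {0})"
  have B': "B \<in> sets (restrict_space borel (sphere (0::'a) 1))" using B by (simp add: sets_sphere_measure)
  have "emeasure sphere_measure B = (\<integral>\<^sup>+ x. ennreal (real DIM('a)) * indicator B x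
      \<partial>distr ?R (restrict_space borel (sphere 0 1)) (\<lambda>x. x /\<^sub>R norm x))"
    unfolding sphere_measure_def by (subst emeasure_density) (use B' in auto)
  also have "\<dots> = ennreal (real DIM('a)) * emeasure (distr ?R (restrict_space borel (sphere 0 1)) (\<lambda>x. x /\<^sub>R norm x)) B"
    using B' by (simp add: nn_integral_cmult_indicator)
  also have "emeasure (distr ?R (restrict_space borel (sphere 0 1)) (\<lambda>x. x /\<^sub>R norm x)) B
      = emeasure ?R ((\<lambda>x. x /\<^sub>R norm x) -` B \<inter> space ?R)"
    by (rule emeasure_distr[OF nrm_measurable B'])
  also have "(\<lambda>x. x /\<^sub>R norm x) -` B \<inter> space ?R = rcone B \<inter> ball 0 1"
    by (auto simp: space_restrict_space rcone_def)
  also have "emeasure ?R (rcone B \<inter> ball 0 1) = emeasure lborel (rcone B \<inter> ball 0 1)"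
    by (rule emeasure_restrict_space) (auto simp: rcone_def)
  finally show ?thesis by (simp add: ennreal_of_nat_eq_real_of_nat)
qed

lemma cone_scale:
  fixes B :: "'a::euclidean_space set"
  assumes t: "t > 0" and B: "rcone B \<in> sets borel"
  shows "emeasure lborel (rcone B \<inter> ball 0 t) = ennreal (t ^ DIM('a)) * emeasure lborel (rcone B \<inter> ball 0 1)"
proof -
  have eq: "(lborel :: 'a measure) = density (distr lborel borel (\<lambda>x. 0 + t *\<^sub>R x)) (\<lambda>_. \<bar>t\<bar> ^ DIM('a))"
    by (rule lborel_affine) (use t in simp)
  have X: "rcone B \<inter> ball 0 t \<in> sets borel" using B by simp
  have "emeasure lborel (rcone B \<inter> ball 0 t) = emeasure (density (distr lborel borel (\<lambda>x. 0 + t *\<^sub>R x)) (\<lambda>_. \<bar>t\<bar> ^ DIM('a))) (rcone B \<inter> ball 0 t)"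
    using arg_cong[OF eq, of "\<lambda>M. emeasure M (rcone B \<inter> ball 0 t)"] .
  also have "\<dots> = ennreal (\<bar>t\<bar> ^ DIM('a)) * emeasure (distr lborel borel (\<lambda>x. 0 + t *\<^sub>R x)) (rcone B \<inter> ball 0 t)"
    using X by (subst emeasure_density_const) auto
  also have "emeasure (distr lborel borel (\<lambda>x. 0 + t *\<^sub>R x)) (rcone B \<inter> ball 0 t)
      = emeasure lborel ((\<lambda>x. 0 + t *\<^sub>R x) -` (rcone B \<inter> ball 0 t) \<inter> space lborel)"
    using X by (subst emeasure_distr) auto
  also have "(\<lambda>x. 0 + t *\<^sub>R x) -` (rcone B \<inter> ball 0 t) \<inter> space lborel = rcone B \<inter> ball 0 1"
  proof (intro set_eqI)
    fix x :: 'a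
    have a1: "t *\<^sub>R x \<noteq> 0 \<longleftrightarrow> x \<noteq> 0" using t by simp
    have a2: "(t *\<^sub>R x) /\<^sub>R norm (t *\<^sub>R x) = x /\<^sub>R norm x"
    proof (cases "x = 0")
      case False
      then show ?thesis using t by (simp add: field_simps)
    qed simp
    have a3: "norm (t *\<^sub>R x) < t \<longleftrightarrow> norm x < 1" using t by simp
    show "x \<in> (\<lambda>x. 0 + t *\<^sub>R x) -` (rcone B \<inter> ball 0 t) \<inter> space lborel \<longleftrightarrow> x \<in> rcone B \<inter> ball 0 1"
      unfolding rcone_def mem_ball dist_0_norm vimage_eq Int_iff mem_Collect_eq add_0_left space_lborel
      by (simp only: a1 a2 a3 UNIV_I simp_thms space_borel)
  qed
  finally show ?thesis using t by simp
qed

definition rho :: "nat \<Rightarrow> real measure" where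
  "rho n = density lborel (\<lambda>r. ennreal (r ^ (n - 1)) * indicator {0<..} r)"

lemma sets_rho[simp, measurable_cong]: "sets (rho n) = sets borel"
  unfolding rho_def by simp

lemma space_rho[simp]: "space (rho n) = UNIV"
  unfolding rho_def by simp

lemma emeasure_rho_lessThan:
  assumes n: "n \<ge> 1"
  shows "emeasure (rho n) {..<b} = (if b > 0 then ennreal (b ^ n / n) else 0)"
proof -
  have "emeasure (rho n) {..<b} = (\<integral>\<^sup>+ r. ennreal (r ^ (n - 1)) * indicator {0<..} r * indicator {..<b} r \<partial>lborel)"
    unfolding rho_def by (subst emeasure_density) auto
  also have "\<dots> = (\<integral>\<^sup>+ r. ennreal (indicator {0..<b} r * r powr (real n - 1)) \<partial>lborel)"
  proof (rule nn_integral_cong)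
    fix r :: real
    show "ennreal (r ^ (n - 1)) * indicator {0<..} r * indicator {..<b} r = ennreal (indicator {0..<b} r * r powr (real n - 1))"
    proof (cases "r > 0")
      case True
      have "r powr (real n - 1) = r ^ (n - 1)"
        using True n by (simp add: powr_realpow[symmetric] of_nat_diff)
      then show ?thesis using True by (simp add: indicator_def)
    next
      case False
      then show ?thesis by (cases "r = 0") (auto simp: indicator_def)
    qed
  qed
  also have "\<dots> = (if b > 0 then ennreal (b ^ n / n) else 0)"
  proof (cases "b > 0")
    case True
    have "(\<integral>\<^sup>+ r. ennreal (indicator {0..<b} r * r powr (real n - 1)) \<partial>lborel) = ennreal (b powr real n / real n)"
      by (rule powr_nn_integral) (use True n in auto)
    then show ?thesis using True by (simp add: powr_realpow)
  next
    case False
    then have "indicator {0..<b} r = (0::real)" for r by (auto simp: indicator_def)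
    then show ?thesis using False by simp
  qed
  finally show ?thesis .
qed

lemma sets_borel_Iio: "sets (borel :: real measure) = sigma_sets UNIV (range lessThan)"
  by (subst borel_Iio) (simp add: sets_measure_of)

lemma cone_radial:
  fixes B :: "'a::euclidean_space set"
  assumes B: "B \<in> sets (sphere_measure :: 'a measure)" and A: "A \<in> sets (borel :: real measure)"
  shows "emeasure lborel (rcone B \<inter> norm -` A) = emeasure (rho DIM('a)) A * emeasure sphere_measure B"
proof -
  let ?n = "DIM('a)"
  have B': "B \<in> sets (restrict_space borel (sphere (0::'a) 1))" using B by (simp add: sets_sphere_measure)
  have CB[measurable]: "rcone B \<in> sets borel" by (rule cone_sets[OF B'])
  define M1 where "M1 = distr (restrict_space lborel (rcone B)) (borel :: real measure) norm"
  define M2 where "M2 = density (rho ?n) (\<lambda>_. emeasure sphere_measure B)"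
  have e1: "emeasure M1 X = emeasure lborel (rcone B \<inter> norm -` X)" if X: "X \<in> sets borel" for X
  proof -
    have "emeasure M1 X = emeasure (restrict_space lborel (rcone B)) (norm -` X \<inter> space (restrict_space lborel (rcone B)))"
      unfolding M1_def by (rule emeasure_distr) (auto intro: measurable_restrict_space1 X)
    also have "\<dots> = emeasure lborel (norm -` X \<inter> rcone B)"
      by (subst emeasure_restrict_space) (auto simp: space_restrict_space)
    finally show ?thesis by (simp add: Int_commute)
  qed
  have e2: "emeasure M2 X = emeasure (rho ?n) X * emeasure sphere_measure B" if X: "X \<in> sets borel" for X
    unfolding M2_def using X by (subst emeasure_density_const) (auto simp: mult.commute)
  have "M1 = M2"
  proof (rule measure_eqI_generator_eq[where E="range lessThan" and \<Omega>=UNIV and A="\<lambda>i. {..<real i}"])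
    show "Int_stable (range lessThan :: real set set)"
    proof (clarsimp simp: Int_stable_def)
      fix a b :: real
      have "{..<a} \<inter> {..<b} = {..<min a b}" by auto
      then show "{..<a} \<inter> {..<b} \<in> range lessThan" by (metis rangeI)
    qed
    show "range lessThan \<subseteq> Pow (UNIV :: real set)" by simp
    show "sets M1 = sigma_sets UNIV (range lessThan)" unfolding M1_def by (simp add: sets_borel_Iio)
    show "sets M2 = sigma_sets UNIV (range lessThan)" unfolding M2_def by (simp add: sets_borel_Iio)
    show "range (\<lambda>i. {..<real i}) \<subseteq> range lessThan" by auto
    show "(\<Union>i. {..<real i}) = UNIV" by (auto intro: reals_Archimedean2)
    show "emeasure M1 {..<real i} \<noteq> \<infinity>" for i
    proof -
      have "emeasure M1 {..<real i} = emeasure lborel (rcone B \<inter> norm -` {..<real i})" by (rule e1) simp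
      also have "\<dots> \<le> emeasure lborel (ball (0::'a) (real i))"
        by (rule emeasure_mono) auto
      also have "\<dots> < \<infinity>" by (rule emeasure_lborel_ball_finite)
      finally show ?thesis by simp
    qed
    fix X :: "real set" assume "X \<in> range lessThan"
    then obtain b where X: "X = {..<b}" by auto
    have nb: "rcone B \<inter> norm -` {..<b} = rcone B \<inter> ball 0 b" by auto
    have n1: "?n \<ge> 1" by (simp add: DIM_positive Suc_leI)
    show "emeasure M1 X = emeasure M2 X"
    proof (cases "b > 0")
      case True
      have "emeasure M1 X = ennreal (b ^ ?n) * emeasure lborel (rcone B \<inter> ball 0 1)"
        unfolding X by (simp add: e1 nb cone_scale[OF True CB])
      also have "\<dots> = ennreal (b ^ ?n / ?n) * (of_nat ?n * emeasure lborel (rcone B \<inter> ball 0 1))"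
      proof -
        have "ennreal (b ^ ?n / ?n) * ennreal (real ?n) = ennreal (b ^ ?n)"
          using n1 True by (simp add: ennreal_mult[symmetric])
        then show ?thesis by (simp add: mult.assoc[symmetric] ennreal_of_nat_eq_real_of_nat)
      qed
      also have "\<dots> = emeasure M2 X"
        unfolding X using True n1 by (simp add: e2 emeasure_rho_lessThan emeasure_sphere_measure[OF B])
      finally show ?thesis .
    next
      case False
      then have "ball (0::'a) b = {}" by simp
      then show ?thesis unfolding X using False n1 by (simp add: e1 e2 nb emeasure_rho_lessThan del: ball_eq_empty)
    qed
  qed
  then show ?thesis using e1[OF A] e2[OF A] by simp
qed



lemma sets_sphere_measure'[measurable_cong]:
  "sets (sphere_measure :: 'a::euclidean_space measure) = sets (restrict_space borel (sphere (0::'a) 1))"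
  by (rule sets_sphere_measure)

definition e0 :: "'a::euclidean_space" where "e0 = (SOME e. e \<in> sphere 0 1)"

lemma e0_sphere: "(e0 :: 'a::euclidean_space) \<in> sphere 0 1"
proof -
  have "sphere (0::'a) 1 \<noteq> {}" by simp
  then show ?thesis unfolding e0_def by (metis ex_in_conv someI)
qed

definition P0 :: "'a::euclidean_space \<Rightarrow> real \<times> 'a" where
  "P0 z = (norm z, if z = 0 then e0 else z /\<^sub>R norm z)"

lemma sigma_finite_rho: "sigma_finite_measure (rho n)"
  unfolding rho_def
  by (subst sigma_finite_measure.sigma_finite_iff_density_finite'[OF sigma_finite_lborel])
     (auto simp: indicator_def ennreal_mult_eq_top_iff)

lemma finite_sphere_measure: "finite_measure (sphere_measure :: 'a::euclidean_space measure)"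
proof (rule finite_measureI)
  have "space (sphere_measure :: 'a measure) \<in> sets sphere_measure" by simp
  then have "emeasure (sphere_measure :: 'a measure) (space sphere_measure)
      = of_nat DIM('a) * emeasure lborel (rcone (space (sphere_measure :: 'a measure)) \<inter> ball 0 1)"
    by (rule emeasure_sphere_measure)
  moreover have "emeasure lborel (rcone (space (sphere_measure :: 'a measure)) \<inter> ball 0 1) \<le> emeasure lborel (ball (0::'a) 1)"
    by (rule emeasure_mono) auto
  moreover have "emeasure lborel (ball (0::'a) 1) < \<infinity>" by (rule emeasure_lborel_ball_finite)
  ultimately have "emeasure lborel (rcone (space (sphere_measure :: 'a measure)) \<inter> ball 0 1) < top"
    using order.strict_trans1 by (simp only: infinity_ennreal_def)
  then have "of_nat DIM('a) * emeasure lborel (rcone (space (sphere_measure :: 'a measure)) \<inter> ball 0 1) < top"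
    by (simp only: ennreal_mult_less_top of_nat_less_top) simp
  then show "emeasure (sphere_measure :: 'a measure) (space sphere_measure) \<noteq> \<infinity>"
    using \<open>emeasure _ _ = _\<close> by simp
qed

lemma sigma_finite_sphere_measure: "sigma_finite_measure (sphere_measure :: 'a::euclidean_space measure)"
  using finite_sphere_measure by (auto simp: finite_measure_def)

lemma P0_measurable: "P0 \<in> measurable lborel (rho n \<Otimes>\<^sub>M (sphere_measure :: 'a::euclidean_space measure))"
proof -
  have 2: "(\<lambda>z::'a. if z = 0 then e0 else z /\<^sub>R norm z) \<in> measurable lborel sphere_measure"
    unfolding measurable_cong_sets[OF refl sets_sphere_measure]
  proof (rule measurable_restrict_space2)
    show "(\<lambda>z::'a. if z = 0 then e0 else z /\<^sub>R norm z) \<in> space lborel \<rightarrow> sphere 0 1"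
      using e0_sphere by auto
    show "(\<lambda>z::'a. if z = 0 then e0 else z /\<^sub>R norm z) \<in> borel_measurable lborel" by measurable
  qed
  show ?thesis unfolding P0_def
    by (intro measurable_Pair 2) (simp add: measurable_cong_sets[OF refl sets_rho])
qed

lemma polar_product:
  "rho DIM('a) \<Otimes>\<^sub>M (sphere_measure :: 'a::euclidean_space measure)
     = distr lborel (rho DIM('a) \<Otimes>\<^sub>M (sphere_measure :: 'a measure)) P0"
proof (rule pair_measure_eqI)
  show "sigma_finite_measure (rho DIM('a))" by (rule sigma_finite_rho)
  show "sigma_finite_measure (sphere_measure :: 'a measure)" by (rule sigma_finite_sphere_measure)
  show "sets (rho DIM('a) \<Otimes>\<^sub>M sphere_measure) = sets (distr lborel (rho DIM('a) \<Otimes>\<^sub>M (sphere_measure :: 'a measure)) P0)"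
    by simp
  fix A B assume A: "A \<in> sets (rho DIM('a))" and B: "B \<in> sets (sphere_measure :: 'a measure)"
  have AB: "A \<times> B \<in> sets (rho DIM('a) \<Otimes>\<^sub>M (sphere_measure :: 'a measure))" using A B by simp
  have B': "B \<in> sets (restrict_space borel (sphere (0::'a) 1))" using B by (simp add: sets_sphere_measure)
  have CB[measurable]: "rcone B \<in> sets borel" by (rule cone_sets[OF B'])
  have A'[measurable]: "A \<in> sets borel" using A by simp
  have "emeasure (distr lborel (rho DIM('a) \<Otimes>\<^sub>M (sphere_measure :: 'a measure)) P0) (A \<times> B)
      = emeasure lborel (P0 -` (A \<times> B) \<inter> space lborel)"
    by (rule emeasure_distr[OF P0_measurable AB])
  also have "P0 -` (A \<times> B) \<inter> space lborel = (rcone B \<inter> norm -` A) \<union> ({0} \<inter> P0 -` (A \<times> B))"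
    by (auto simp: P0_def rcone_def)
  also have "emeasure lborel \<dots> = emeasure lborel (rcone B \<inter> norm -` A)"
  proof (rule emeasure_Un_null_set)
    show "rcone B \<inter> norm -` A \<in> sets lborel" by simp
    have "{0} \<inter> P0 -` (A \<times> B) \<subseteq> {0::'a}" by auto
    moreover have "{0::'a} \<in> null_sets lborel" by (simp add: null_sets_def)
    moreover have "{0} \<inter> P0 -` (A \<times> B) \<in> sets lborel"
    proof -
      show ?thesis
      proof (cases "{0} \<inter> P0 -` (A \<times> B) = {}")
        case True then show ?thesis by (simp only: True) simp
      next
        case False
        then have "{0} \<inter> P0 -` (A \<times> B) = {0::'a}" by auto
        then show ?thesis by simp
      qed
    qed
    ultimately show "{0} \<inter> P0 -` (A \<times> B) \<in> null_sets lborel" using null_sets_subset by blast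
  qed
  also have "\<dots> = emeasure (rho DIM('a)) A * emeasure sphere_measure B"
    by (rule cone_radial[OF B A'])
  finally show "emeasure (rho DIM('a)) A * emeasure sphere_measure B
      = emeasure (distr lborel (rho DIM('a) \<Otimes>\<^sub>M (sphere_measure :: 'a measure)) P0) (A \<times> B)" by simp
qed

lemma polar:
  fixes g :: "'a::euclidean_space \<Rightarrow> ennreal"
  assumes g[measurable]: "g \<in> borel_measurable borel"
  shows "(\<integral>\<^sup>+z. g z \<partial>lborel) = (\<integral>\<^sup>+\<theta>. (\<integral>\<^sup>+r. g (r *\<^sub>R \<theta>) \<partial>rho DIM('a)) \<partial>sphere_measure)"
proof -
  interpret pair_sigma_finite "rho DIM('a)" "sphere_measure :: 'a measure"
    unfolding pair_sigma_finite_def using sigma_finite_rho sigma_finite_sphere_measure by blast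
  have [measurable]: "fst \<in> borel_measurable (rho DIM('a) \<Otimes>\<^sub>M (sphere_measure :: 'a measure))"
    using measurable_fst[of "rho DIM('a)" "sphere_measure :: 'a measure"]
    by (simp add: measurable_cong_sets[OF refl sets_rho])
  have [measurable]: "snd \<in> borel_measurable (rho DIM('a) \<Otimes>\<^sub>M (sphere_measure :: 'a measure))"
  proof (rule measurable_compose[OF measurable_snd])
    show "(\<lambda>x. x) \<in> (sphere_measure :: 'a measure) \<rightarrow>\<^sub>M borel"
      unfolding measurable_cong_sets[OF sets_sphere_measure refl]
      by (rule measurable_restrict_space1) simp
  qed
  have gm: "(\<lambda>x. g (fst x *\<^sub>R snd x)) \<in> borel_measurable (rho DIM('a) \<Otimes>\<^sub>M (sphere_measure :: 'a measure))"
    by measurable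
  have "(\<integral>\<^sup>+z. g z \<partial>lborel) = (\<integral>\<^sup>+z. g (fst (P0 z) *\<^sub>R snd (P0 z)) \<partial>lborel)"
    by (intro nn_integral_cong) (simp add: P0_def)
  also have "\<dots> = (\<integral>\<^sup>+x. g (fst x *\<^sub>R snd x) \<partial>distr lborel (rho DIM('a) \<Otimes>\<^sub>M (sphere_measure :: 'a measure)) P0)"
    using P0_measurable[where 'a='a and n="DIM('a)"] by (intro nn_integral_distr[symmetric]) (simp_all add: gm)
  also have "\<dots> = (\<integral>\<^sup>+x. g (fst x *\<^sub>R snd x) \<partial>(rho DIM('a) \<Otimes>\<^sub>M (sphere_measure :: 'a measure)))"
    by (simp only: polar_product[symmetric])
  also have "\<dots> = (\<integral>\<^sup>+\<theta>. (\<integral>\<^sup>+r. g (r *\<^sub>R \<theta>) \<partial>rho DIM('a)) \<partial>sphere_measure)"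
    using nn_integral_snd[OF gm] by simp
  finally show ?thesis .
qed



lemma Bv_scale:
  fixes G :: "'a::euclidean_space \<Rightarrow> real"
  assumes c0: "c > 0" and G[measurable]: "G \<in> borel_measurable borel"
  shows "(\<integral>\<^sup>+ s. ennreal (G (x - s *\<^sub>R w)) * indicator {c..2*c} s \<partial>lborel) = ennreal c * Bv G (c *\<^sub>R w) x"
proof -
  define F where "F s = ennreal (G (x - s *\<^sub>R w)) * indicator {c..2*c} s" for s
  have Fm[measurable]: "F \<in> borel_measurable borel" unfolding F_def by measurable
  have "(\<integral>\<^sup>+ s. F s \<partial>lborel) = ennreal c * (\<integral>\<^sup>+ t. F (c * t) \<partial>lborel)"
    by (rule nn_integral_real_scale[OF c0 Fm])
  also have "(\<lambda>t. F (c * t)) = (\<lambda>t. ennreal (G (x - t *\<^sub>R (c *\<^sub>R w))) * indicator {1..2} t)"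
  proof
    fix t
    have "c * t \<in> {c..2*c} \<longleftrightarrow> t \<in> {1..2}" using c0 by auto
    then show "F (c * t) = ennreal (G (x - t *\<^sub>R (c *\<^sub>R w))) * indicator {1..2} t"
      unfolding F_def by (simp add: indicator_def mult.commute)
  qed
  finally show ?thesis unfolding Bv_def F_def by simp
qed

lemma nn_integral_reflect:
  fixes h :: "'a::euclidean_space \<Rightarrow> ennreal"
  assumes [measurable]: "h \<in> borel_measurable borel"
  shows "(\<integral>\<^sup>+ y. h (x - y) \<partial>lborel) = (\<integral>\<^sup>+ z. h z \<partial>lborel)"
proof -
  have eq: "(lborel :: 'a measure) = density (distr lborel borel (\<lambda>y. x + (-1) *\<^sub>R y)) (\<lambda>_. \<bar>-1::real\<bar> ^ DIM('a))"
    by (rule lborel_affine) simp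
  have "(\<integral>\<^sup>+ z. h z \<partial>lborel) = (\<integral>\<^sup>+ z. h z \<partial>(density (distr lborel borel (\<lambda>y. x + (-1) *\<^sub>R y)) (\<lambda>_. \<bar>-1::real\<bar> ^ DIM('a))))"
    using arg_cong[OF eq, of "\<lambda>M. \<integral>\<^sup>+ z. h z \<partial>M"] .
  also have "\<dots> = (\<integral>\<^sup>+ z. h z \<partial>(distr lborel borel (\<lambda>y. x + (-1) *\<^sub>R y)))"
    by (simp add: density_1)
  also have "\<dots> = (\<integral>\<^sup>+ y. h (x + (-1) *\<^sub>R y) \<partial>lborel)"
    by (subst nn_integral_distr) auto
  finally show ?thesis by simp
qed

definition Omega_s :: "('a::euclidean_space \<Rightarrow> real) \<Rightarrow> 'a \<Rightarrow> real" where
  "Omega_s \<Omega> \<theta> = indicator (sphere 0 1) \<theta> *\<^sub>R \<Omega> \<theta>"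

lemma Omega_s_measurable:
  assumes "\<Omega> \<in> borel_measurable (sphere_measure :: 'a::euclidean_space measure)"
  shows "Omega_s \<Omega> \<in> borel_measurable (borel :: 'a measure)"
proof -
  have "\<Omega> \<in> borel_measurable (restrict_space borel (sphere (0::'a) 1))"
    using assms by (simp add: measurable_cong_sets[OF sets_sphere_measure refl])
  then show ?thesis unfolding Omega_s_def
    by (subst (asm) borel_measurable_restrict_space_iff) auto
qed

lemma sigma_k_Omega_s: "sigma_k \<Omega> k z = sigma_k (Omega_s \<Omega>) k z"
proof -
  have "z /\<^sub>R norm z \<in> sphere 0 1" if "2 powr real_of_int k \<le> norm z"
  proof -
    have "norm z > 0" using that powr_gt_zero[of 2 "real_of_int k"] by linarith
    then show ?thesis by simp
  qed
  then show ?thesis unfolding sigma_k_def Omega_s_def by (auto simp: indicator_def)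
qed

lemma sigma_k_measurable[measurable]:
  assumes [measurable]: "\<Omega>' \<in> borel_measurable (borel :: 'a::euclidean_space measure)"
  shows "sigma_k \<Omega>' k \<in> borel_measurable (borel :: 'a measure)"
  unfolding sigma_k_def by measurable

lemma kernel_bound:
  fixes \<Omega> G :: "'a::euclidean_space \<Rightarrow> real"
  assumes Om: "\<Omega> \<in> borel_measurable (sphere_measure :: 'a measure)"
    and G[measurable]: "G \<in> borel_measurable borel" and G0: "\<And>y. G y \<ge> 0"
  shows "(\<integral>\<^sup>+ y. ennreal (\<bar>sigma_k \<Omega> k (x - y)\<bar> * G y) \<partial>lborel)
      \<le> (\<integral>\<^sup>+ \<theta>. ennreal \<bar>\<Omega> \<theta>\<bar> * Bv G ((2 powr real_of_int k) *\<^sub>R \<theta>) x \<partial>sphere_measure)"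
proof -
  let ?n = "DIM('a)"
  have Osm[measurable]: "Omega_s \<Omega> \<in> borel_measurable borel" by (rule Omega_s_measurable[OF Om])
  define F where "F z = ennreal (\<bar>sigma_k (Omega_s \<Omega>) k z\<bar> * G (x - z))" for z
  have Fm[measurable]: "F \<in> borel_measurable borel" unfolding F_def by measurable
  define c :: real where "c = 2 powr real_of_int k"
  have c0: "c > 0" unfolding c_def by simp
  have c2: "2 powr real_of_int (k + 1) = 2 * c" unfolding c_def by (simp add: powr_add)
  have "(\<integral>\<^sup>+ y. ennreal (\<bar>sigma_k \<Omega> k (x - y)\<bar> * G y) \<partial>lborel) = (\<integral>\<^sup>+ y. F (x - y) \<partial>lborel)"
    unfolding F_def by (simp add: sigma_k_Omega_s[symmetric])
  also have "\<dots> = (\<integral>\<^sup>+ z. F z \<partial>lborel)" by (rule nn_integral_reflect[OF Fm])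
  also have "\<dots> = (\<integral>\<^sup>+\<theta>. (\<integral>\<^sup>+r. F (r *\<^sub>R \<theta>) \<partial>rho ?n) \<partial>sphere_measure)" by (rule polar[OF Fm])
  also have "\<dots> \<le> (\<integral>\<^sup>+ \<theta>. ennreal \<bar>\<Omega> \<theta>\<bar> * Bv G (c *\<^sub>R \<theta>) x \<partial>sphere_measure)"
  proof (rule nn_integral_mono)
    fix \<theta> :: 'a assume "\<theta> \<in> space sphere_measure"
    then have th: "norm \<theta> = 1" by (simp add: space_sphere_measure)
    have "(\<integral>\<^sup>+r. F (r *\<^sub>R \<theta>) \<partial>rho ?n) = (\<integral>\<^sup>+r. ennreal (r ^ (?n - 1)) * indicator {0<..} r * F (r *\<^sub>R \<theta>) \<partial>lborel)"
      unfolding rho_def by (subst nn_integral_density) (auto simp: mult.assoc)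
    also have "\<dots> \<le> (\<integral>\<^sup>+r. ennreal (\<bar>\<Omega> \<theta>\<bar> / c) * (ennreal (G (x - r *\<^sub>R \<theta>)) * indicator {c..2*c} r) \<partial>lborel)"
    proof (rule nn_integral_mono)
      fix r :: real
      show "ennreal (r ^ (?n - 1)) * indicator {0<..} r * F (r *\<^sub>R \<theta>) \<le> ennreal (\<bar>\<Omega> \<theta>\<bar> / c) * (ennreal (G (x - r *\<^sub>R \<theta>)) * indicator {c..2*c} r)"
      proof (cases "r > 0 \<and> r \<in> {c..2*c}")
        case False
        have "indicator {0<..} r * F (r *\<^sub>R \<theta>) = 0"
        proof (cases "r > 0")
          case True
          then have "norm (r *\<^sub>R \<theta>) = r" using th by simp
          then have "sigma_k (Omega_s \<Omega>) k (r *\<^sub>R \<theta>) = 0"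
            using False True unfolding sigma_k_def c2 c_def[symmetric] by auto
          then show ?thesis unfolding F_def by simp
        qed simp
        then show ?thesis by (metis mult.assoc mult_zero_right zero_le)
      next
        case True
        then have r0: "r > 0" and rc: "c \<le> r" "r \<le> 2 * c" by auto
        have nr: "norm (r *\<^sub>R \<theta>) = r" using th r0 by simp
        have dir: "(r *\<^sub>R \<theta>) /\<^sub>R norm (r *\<^sub>R \<theta>) = \<theta>" using nr r0 by simp
        have "sigma_k (Omega_s \<Omega>) k (r *\<^sub>R \<theta>) = Omega_s \<Omega> \<theta> / r ^ ?n"
          unfolding sigma_k_def c2 c_def[symmetric] using rc nr dir th r0 by simp
        also have "Omega_s \<Omega> \<theta> = \<Omega> \<theta>" unfolding Omega_s_def using th by simp
        finally have sk: "sigma_k (Omega_s \<Omega>) k (r *\<^sub>R \<theta>) = \<Omega> \<theta> / r ^ ?n" .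
        have n1: "?n \<ge> 1" by (simp add: DIM_positive Suc_leI)
        have rn: "r ^ (?n - 1) * (\<bar>\<Omega> \<theta>\<bar> / r ^ ?n) = \<bar>\<Omega> \<theta>\<bar> / r"
        proof -
          have "r ^ ?n = r ^ (?n - 1) * r" using n1 by (metis Suc_diff_1 less_le_trans zero_less_one power_Suc2 n1)
          then show ?thesis using r0 by (simp add: field_simps)
        qed
        have "ennreal (r ^ (?n - 1)) * indicator {0<..} r * F (r *\<^sub>R \<theta>) = ennreal (\<bar>\<Omega> \<theta>\<bar> / r * G (x - r *\<^sub>R \<theta>))"
          unfolding F_def sk using r0 G0 by (simp add: ennreal_mult[symmetric] rn[symmetric] abs_divide mult.assoc)
        also have "\<dots> \<le> ennreal (\<bar>\<Omega> \<theta>\<bar> / c * G (x - r *\<^sub>R \<theta>))"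
          using r0 c0 rc G0 by (intro ennreal_leI mult_right_mono divide_left_mono) auto
        also have "\<dots> = ennreal (\<bar>\<Omega> \<theta>\<bar> / c) * (ennreal (G (x - r *\<^sub>R \<theta>)) * indicator {c..2*c} r)"
          using rc c0 G0 by (simp add: ennreal_mult[symmetric])
        finally show ?thesis .
      qed
    qed
    also have "\<dots> = ennreal (\<bar>\<Omega> \<theta>\<bar> / c) * (\<integral>\<^sup>+r. ennreal (G (x - r *\<^sub>R \<theta>)) * indicator {c..2*c} r \<partial>lborel)"
      by (rule nn_integral_cmult) measurable
    also have "\<dots> = ennreal (\<bar>\<Omega> \<theta>\<bar> / c) * (ennreal c * Bv G (c *\<^sub>R \<theta>) x)"
      by (simp add: Bv_scale[OF c0 G])
    also have "\<dots> = ennreal \<bar>\<Omega> \<theta>\<bar> * Bv G (c *\<^sub>R \<theta>) x"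
      using c0 by (simp add: mult.assoc[symmetric] ennreal_mult[symmetric])
    finally show "(\<integral>\<^sup>+r. F (r *\<^sub>R \<theta>) \<partial>rho ?n) \<le> ennreal \<bar>\<Omega> \<theta>\<bar> * Bv G (c *\<^sub>R \<theta>) x" .
  qed
  finally show ?thesis unfolding c_def .
qed



definition Mth :: "('a::euclidean_space \<Rightarrow> real) \<Rightarrow> 'a \<Rightarrow> 'a \<Rightarrow> ennreal" where
  "Mth G \<theta> x = (SUP k::int. Bv G ((2 powr real_of_int k) *\<^sub>R \<theta>) x)"

lemma Mth_measurable_gen[measurable (raw)]:
  assumes [measurable]: "G \<in> borel_measurable borel" "u \<in> borel_measurable N" "v \<in> borel_measurable N"
  shows "(\<lambda>z. Mth G (u z) (v z)) \<in> borel_measurable N"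
  unfolding Mth_def Bv_def by measurable

lemma fst_sphere_measurable[measurable]:
  "fst \<in> borel_measurable ((sphere_measure :: 'a::euclidean_space measure) \<Otimes>\<^sub>M (lborel :: 'a measure))"
proof (rule measurable_compose[OF measurable_fst])
  show "(\<lambda>x. x) \<in> (sphere_measure :: 'a measure) \<rightarrow>\<^sub>M borel"
    unfolding measurable_cong_sets[OF sets_sphere_measure refl]
    by (rule measurable_restrict_space1) simp
qed

lemma snd_sphere_measurable[measurable]:
  "snd \<in> borel_measurable ((sphere_measure :: 'a::euclidean_space measure) \<Otimes>\<^sub>M (lborel :: 'a measure))"
  using measurable_snd[of "sphere_measure :: 'a measure" "lborel :: 'a measure"] by simp

lemma id_sphere_measurable[measurable]:
  "(\<lambda>x. x) \<in> borel_measurable (sphere_measure :: 'a::euclidean_space measure)"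
  unfolding measurable_cong_sets[OF sets_sphere_measure refl]
  by (rule measurable_restrict_space1) simp

lemma main_bound:
  fixes \<Omega> :: "'a::euclidean_space \<Rightarrow> real" and p :: real
  assumes p: "p > 1" and Oint: "integrable sphere_measure \<Omega>"
  shows "\<exists>C::real. \<forall>f :: 'a \<Rightarrow> real. f \<in> borel_measurable lebesgue \<longrightarrow>
           (\<integral>\<^sup>+ x. ennreal (\<bar>f x\<bar> powr p) \<partial>lebesgue) < \<infinity> \<longrightarrow>
           Lp_norm_enn p (sigma_star \<Omega> f) \<le> ennreal C * Lp_norm p f"
proof -
  have p0: "p > 0" using p by simp
  have Om[measurable]: "\<Omega> \<in> borel_measurable sphere_measure" using Oint by (rule borel_measurable_integrable)
  define W where "W = (\<integral>\<^sup>+\<theta>. ennreal \<bar>\<Omega> \<theta>\<bar> \<partial>sphere_measure)"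
  have Wfin: "W < \<infinity>" using Oint unfolding W_def integrable_iff_bounded by simp
  define Cp where "Cp = 2 powr p * (2 powr p * p / (p - 1))"
  have Cp0: "Cp \<ge> 0" unfolding Cp_def using p by simp
  define C where "C = enn2real W * Cp powr (1 / p)"
  show ?thesis
  proof (intro exI[of _ C] allI impI)
    fix f :: "'a \<Rightarrow> real"
    assume fm: "f \<in> borel_measurable lebesgue" and ffin: "(\<integral>\<^sup>+ x. ennreal (\<bar>f x\<bar> powr p) \<partial>lebesgue) < \<infinity>"
    obtain g where gm[measurable]: "g \<in> borel_measurable lborel" and fg: "AE x in lborel. f x = g x"
      using completion_ex_borel_measurable_real[OF fm] by blast
    define G where "G y = \<bar>g y\<bar>" for y
    have Gm[measurable]: "G \<in> borel_measurable borel" unfolding G_def using gm by simp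
    have G0: "G y \<ge> 0" for y unfolding G_def by simp
    define Q where "Q = (\<integral>\<^sup>+ y. ennreal (G y powr p) \<partial>lborel)"
    have Qeq: "(\<integral>\<^sup>+ x. ennreal (\<bar>f x\<bar> powr p) \<partial>lebesgue) = Q"
      unfolding Q_def nn_integral_completion
      by (rule nn_integral_cong_AE) (use fg in \<open>auto simp: G_def\<close>)
    define H where "H \<theta> x = ennreal \<bar>\<Omega> \<theta>\<bar> * enn_powr (Mth G \<theta> x) p" for \<theta> x
    have pt: "enn_powr (sigma_star \<Omega> f x) p \<le> enn_powr W (p - 1) * (\<integral>\<^sup>+\<theta>. H \<theta> x \<partial>sphere_measure)" for x
    proof -
      have "sigma_star \<Omega> f x \<le> (\<integral>\<^sup>+\<theta>. ennreal \<bar>\<Omega> \<theta>\<bar> * Mth G \<theta> x \<partial>sphere_measure)"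
        unfolding sigma_star_def
      proof (rule SUP_least)
        fix k :: int
        have "(\<integral>\<^sup>+ y. ennreal (\<bar>sigma_k \<Omega> k (x - y)\<bar> * \<bar>f y\<bar>) \<partial>lebesgue)
            = (\<integral>\<^sup>+ y. ennreal (\<bar>sigma_k \<Omega> k (x - y)\<bar> * G y) \<partial>lborel)"
          unfolding nn_integral_completion
          by (rule nn_integral_cong_AE) (use fg in \<open>auto simp: G_def\<close>)
        also have "\<dots> \<le> (\<integral>\<^sup>+ \<theta>. ennreal \<bar>\<Omega> \<theta>\<bar> * Bv G ((2 powr real_of_int k) *\<^sub>R \<theta>) x \<partial>sphere_measure)"
          by (rule kernel_bound[OF Om Gm G0])
        also have "\<dots> \<le> (\<integral>\<^sup>+\<theta>. ennreal \<bar>\<Omega> \<theta>\<bar> * Mth G \<theta> x \<partial>sphere_measure)"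
          unfolding Mth_def by (intro nn_integral_mono mult_left_mono SUP_upper) auto
        finally show "(\<integral>\<^sup>+ y. ennreal (\<bar>sigma_k \<Omega> k (x - y)\<bar> * \<bar>f y\<bar>) \<partial>lebesgue)
            \<le> (\<integral>\<^sup>+\<theta>. ennreal \<bar>\<Omega> \<theta>\<bar> * Mth G \<theta> x \<partial>sphere_measure)" .
      qed
      then have "enn_powr (sigma_star \<Omega> f x) p \<le> enn_powr (\<integral>\<^sup>+\<theta>. ennreal \<bar>\<Omega> \<theta>\<bar> * Mth G \<theta> x \<partial>sphere_measure) p"
        by (rule enn_powr_mono[OF p0])
      also have "\<dots> \<le> enn_powr W (p - 1) * (\<integral>\<^sup>+\<theta>. H \<theta> x \<partial>sphere_measure)"
      proof -
        define D where "D = density sphere_measure (\<lambda>\<theta>. ennreal \<bar>\<Omega> \<theta>\<bar>)"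
        have int: "(\<integral>\<^sup>+\<theta>. h \<theta> \<partial>D) = (\<integral>\<^sup>+\<theta>. ennreal \<bar>\<Omega> \<theta>\<bar> * h \<theta> \<partial>sphere_measure)"
          if [measurable]: "h \<in> borel_measurable sphere_measure" for h
          unfolding D_def by (subst nn_integral_density) auto
        have WD: "emeasure D (space D) = W"
          unfolding D_def W_def by (subst emeasure_density) (auto intro!: nn_integral_cong)
        have "enn_powr (\<integral>\<^sup>+\<theta>. Mth G \<theta> x \<partial>D) p \<le> enn_powr (emeasure D (space D)) (p - 1) * (\<integral>\<^sup>+\<theta>. enn_powr (Mth G \<theta> x) p \<partial>D)"
          by (rule enn_jensen[OF p]) (simp add: D_def)
        then show ?thesis using WD by (simp add: int H_def)
      qed
      finally show ?thesis .
    qed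
    have Hm: "(\<lambda>z. H (fst z) (snd z)) \<in> borel_measurable ((sphere_measure :: 'a measure) \<Otimes>\<^sub>M (lborel :: 'a measure))"
      unfolding H_def by measurable
    interpret SP: pair_sigma_finite "sphere_measure :: 'a measure" "lborel :: 'a measure"
      unfolding pair_sigma_finite_def using sigma_finite_sphere_measure sigma_finite_lborel by blast
    have "(\<integral>\<^sup>+ x. enn_powr (sigma_star \<Omega> f x) p \<partial>lebesgue)
        = (\<integral>\<^sup>+ x. enn_powr (sigma_star \<Omega> f x) p \<partial>lborel)" by (simp add: nn_integral_completion)
    also have "\<dots> \<le> (\<integral>\<^sup>+ x. enn_powr W (p - 1) * (\<integral>\<^sup>+\<theta>. H \<theta> x \<partial>sphere_measure) \<partial>lborel)"
      by (rule nn_integral_mono) (rule pt)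
    also have "\<dots> = enn_powr W (p - 1) * (\<integral>\<^sup>+ x. (\<integral>\<^sup>+\<theta>. H \<theta> x \<partial>sphere_measure) \<partial>lborel)"
      by (rule nn_integral_cmult) (unfold H_def, measurable)
    also have "(\<integral>\<^sup>+ x. (\<integral>\<^sup>+\<theta>. H \<theta> x \<partial>sphere_measure) \<partial>lborel) = (\<integral>\<^sup>+\<theta>. (\<integral>\<^sup>+ x. H \<theta> x \<partial>lborel) \<partial>sphere_measure)"
    proof -
      have Hm': "(\<lambda>(\<theta>, x). H \<theta> x) \<in> borel_measurable ((sphere_measure :: 'a measure) \<Otimes>\<^sub>M (lborel :: 'a measure))"
        using Hm by (simp add: split_beta')
      show ?thesis using SP.Fubini'[OF Hm'] by simp
    qed
    also have "\<dots> \<le> (\<integral>\<^sup>+\<theta>. ennreal \<bar>\<Omega> \<theta>\<bar> * (ennreal Cp * Q) \<partial>sphere_measure)"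
    proof (rule nn_integral_mono)
      fix \<theta> :: 'a
      have "(\<integral>\<^sup>+ x. H \<theta> x \<partial>lborel) = ennreal \<bar>\<Omega> \<theta>\<bar> * (\<integral>\<^sup>+ x. enn_powr (Mth G \<theta> x) p \<partial>lborel)"
        unfolding H_def by (rule nn_integral_cmult) (intro enn_powr_measurable Mth_measurable_gen[OF Gm]; simp)
      also have "(\<integral>\<^sup>+ x. enn_powr (Mth G \<theta> x) p \<partial>lborel) \<le> ennreal Cp * Q"
      proof -
        have "(\<integral>\<^sup>+ x. enn_powr (Mth G \<theta> x) p \<partial>lborel) \<le> ennreal (2 powr p) * (ennreal (2 powr p * p / (p - 1)) * Q)"
          unfolding Mth_def Q_def by (rule dir_max_int[OF p Gm G0])
        also have "\<dots> = ennreal Cp * Q"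
        proof -
          have "ennreal (2 powr p) * ennreal (2 powr p * p / (p - 1)) = ennreal Cp"
            unfolding Cp_def using p by (simp add: ennreal_mult[symmetric])
          then show ?thesis by (simp add: mult.assoc[symmetric])
        qed
        finally show ?thesis .
      qed
      finally show "(\<integral>\<^sup>+ x. H \<theta> x \<partial>lborel) \<le> ennreal \<bar>\<Omega> \<theta>\<bar> * (ennreal Cp * Q)"
        by (simp add: mult_left_mono)
    qed
    also have "\<dots> = W * (ennreal Cp * Q)" unfolding W_def by (rule nn_integral_multc) simp
    finally have main: "(\<integral>\<^sup>+ x. enn_powr (sigma_star \<Omega> f x) p \<partial>lebesgue) \<le> enn_powr W (p - 1) * (W * (ennreal Cp * Q))"
      by (simp add: mult_left_mono)
    obtain w where w: "W = ennreal w" "w \<ge> 0" using Wfin by (cases W) auto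
    have Wp: "enn_powr W (p - 1) * W = enn_powr W p"
    proof (cases "w = 0")
      case True then show ?thesis using w p by (simp add: enn_powr_ennreal)
    next
      case False
      then have "w > 0" using w by simp
      then have "w powr (p - 1) * w = w powr p" by (simp add: powr_diff)
      then show ?thesis using w p by (simp add: enn_powr_ennreal ennreal_mult[symmetric])
    qed
    have "Lp_norm_enn p (sigma_star \<Omega> f) = enn_powr (\<integral>\<^sup>+ x. enn_powr (sigma_star \<Omega> f x) p \<partial>lebesgue) (1 / p)"
      unfolding Lp_norm_enn_def ..
    also have "\<dots> \<le> enn_powr (enn_powr W p * (ennreal Cp * Q)) (1 / p)"
      using main Wp by (intro enn_powr_mono) (auto simp: mult.assoc[symmetric] p0)
    also have "\<dots> = W * (enn_powr (ennreal Cp) (1 / p) * enn_powr Q (1 / p))"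
      using p0 by (simp add: enn_powr_mult enn_powr_inv)
    also have "\<dots> = ennreal C * Lp_norm p f"
      unfolding C_def Lp_norm_def Qeq using w Cp0 by (simp add: enn_powr_ennreal ennreal_mult mult.assoc)
    finally show "Lp_norm_enn p (sigma_star \<Omega> f) \<le> ennreal C * Lp_norm p f" .
  qed
qed


theorem mainTheorem5:
  fixes \<Omega> :: "'a::euclidean_space \<Rightarrow> real" and \<alpha> p :: real
  assumes "DIM('a) \<ge> 2"
    and "\<alpha> > 0"
    and "integrable sphere_measure \<Omega>"
    and "(\<integral>\<theta>. \<Omega> \<theta> \<partial>sphere_measure) = 0"
    and "(SUP \<xi>\<in>sphere 0 1. \<integral>\<^sup>+ \<theta>. ennreal (\<bar>\<Omega> \<theta>\<bar> * (ln (1 / \<bar>\<theta> \<bullet> \<xi>\<bar>)) powr (1 + \<alpha>))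
            \<partial>sphere_measure) < \<infinity>"
    and "(2 + \<alpha>) / (1 + \<alpha>) < p" and "p < 2 + \<alpha>"
  shows "\<exists>C::real. \<forall>f :: 'a \<Rightarrow> real. f \<in> borel_measurable lebesgue \<longrightarrow>
           (\<integral>\<^sup>+ x. ennreal (\<bar>f x\<bar> powr p) \<partial>lebesgue) < \<infinity> \<longrightarrow>
           Lp_norm_enn p (sigma_star \<Omega> f) \<le> ennreal C * Lp_norm p f"
proof -
  have "1 < (2 + \<alpha>) / (1 + \<alpha>)" using assms(2) by (simp add: field_simps)
  then have p: "p > 1" using assms(6) by linarith
  show ?thesis by (rule main_bound[OF p assms(3)])
qed

end
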